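(* Let $q$ be a prime power, $n$ a positive integer, $\sigma$ a sesquilinear form of $\mathbb F_{q^{2n}}/\mathbb F_{q^2}$, and $C$ a coefficient matrix of a reduced form of $\sigma$. Then $\sigma$ has a diagonal coefficient matrix whose nonzero entries are $d_1,\dots,d_r$ if and only if $\operatorname{rad}\sigma=\operatorname{rad}\sigma^*$ and $C^*C^{-1}$ is conjugate to the diagonal matrix with diagonal entries $d_1^{q-1},\dots,d_r^{q-1}$.
   Context: A sesquilinear form of $\mathbb F_{q^{2n}}/\mathbb F_{q^2}$ is a map $\sigma:\mathbb F_{q^{2n}}^2\to\mathbb F_{q^2}$ that is $\mathbb F_{q^2}$-linear in the first argument and additive with $\sigma(u,cv)=c^q\sigma(u,v)$ ($c\in\mathbb F_{q^2}$) in the second. $\sigma^*(u,v)=\sigma(v,u)^q$. $\operatorname{rad}\sigma=\{u:\sigma(u,v)=0\ \forall v\}$. If $W$ is an $\mathbb F_{q^2}$-subspace with $\mathbb F_{q^{2n}}=W\oplus(\operatorname{rad}\sigma\cap\operatorname{rad}\sigma^* )$, the restriction of $\sigma$ to $W\times W$ is a reduced form of $\sigma$. The coefficient matrix of a form w.r.t. a basis $\beta_1,\dots,\beta_k$ of its domain has $(i,j)$ entry $\sigma(\beta_i,\beta_j)$. For a matrix $M$, $M^*$ is the transpose of $M$ with every entry raised to the $q$-th power. *)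

theory Defs
  imports "Jordan_Normal_Form.Matrix" "HOL-Computational_Algebra.Primes" "HOL-Library.Multiset"
begin

text \<open>Ambient field: a finite field 'a with CARD('a) = q^(2n).
  The subfield F_{q^2} is the set of fixed points of x -> x^(q^2).\<close>

definition prime_power :: "nat \<Rightarrow> bool" where
  "prime_power q \<longleftrightarrow> (\<exists>p k. prime p \<and> k > 0 \<and> q = p ^ k)"

definition subF :: "nat \<Rightarrow> 'a::field set" where
  "subF q = {x. x ^ (q^2) = x}"

definition sesquilinear :: "nat \<Rightarrow> ('a::field \<Rightarrow> 'a \<Rightarrow> 'a) \<Rightarrow> bool" where
  "sesquilinear q \<sigma> \<longleftrightarrow>
     (\<forall>u v. \<sigma> u v \<in> subF q) \<and>
     (\<forall>c\<in>subF q. \<forall>u u' v. \<sigma> (c * u + u') v = c * \<sigma> u v + \<sigma> u' v) \<and>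
     (\<forall>u v v'. \<sigma> u (v + v') = \<sigma> u v + \<sigma> u v') \<and>
     (\<forall>c\<in>subF q. \<forall>u v. \<sigma> u (c * v) = c ^ q * \<sigma> u v)"

definition adj_form :: "nat \<Rightarrow> ('a::field \<Rightarrow> 'a \<Rightarrow> 'a) \<Rightarrow> ('a \<Rightarrow> 'a \<Rightarrow> 'a)" where
  "adj_form q \<sigma> = (\<lambda>u v. (\<sigma> v u) ^ q)"

definition rad :: "('a::field \<Rightarrow> 'a \<Rightarrow> 'a) \<Rightarrow> 'a set" where
  "rad \<sigma> = {u. \<forall>v. \<sigma> u v = 0}"

definition K_span :: "nat \<Rightarrow> 'a::field list \<Rightarrow> 'a set" where
  "K_span q bs = {(\<Sum>i<length bs. c i * bs ! i) | c. \<forall>i<length bs. c i \<in> subF q}"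

definition K_indep :: "nat \<Rightarrow> 'a::field list \<Rightarrow> bool" where
  "K_indep q bs \<longleftrightarrow> (\<forall>c. (\<forall>i<length bs. c i \<in> subF q) \<and> (\<Sum>i<length bs. c i * bs ! i) = 0
                        \<longrightarrow> (\<forall>i<length bs. c i = 0))"

definition K_basis_of :: "nat \<Rightarrow> 'a::field set \<Rightarrow> 'a list \<Rightarrow> bool" where
  "K_basis_of q W bs \<longleftrightarrow> K_indep q bs \<and> K_span q bs = W"

text \<open>bs is an F_{q^2}-basis of a subspace W with F = W (+) (rad sigma \<inter> rad sigma*),
  i.e. a basis of the domain of a reduced form of sigma.\<close>
definition reduced_form_basis :: "nat \<Rightarrow> ('a::field \<Rightarrow> 'a \<Rightarrow> 'a) \<Rightarrow> 'a list \<Rightarrow> bool" where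
  "reduced_form_basis q \<sigma> bs \<longleftrightarrow>
     (let R = rad \<sigma> \<inter> rad (adj_form q \<sigma>); W = K_span q bs in
       K_indep q bs \<and> W \<inter> R = {0} \<and> {w + r | w r. w \<in> W \<and> r \<in> R} = UNIV)"

definition coeff_mat :: "('a::field \<Rightarrow> 'a \<Rightarrow> 'a) \<Rightarrow> 'a list \<Rightarrow> 'a mat" where
  "coeff_mat \<sigma> bs = mat (length bs) (length bs) (\<lambda>(i, j). \<sigma> (bs ! i) (bs ! j))"

definition star_mat :: "nat \<Rightarrow> 'a::field mat \<Rightarrow> 'a mat" where
  "star_mat q M = transpose_mat (map_mat (\<lambda>x. x ^ q) M)"

definition has_diag_coeff_mat :: "nat \<Rightarrow> ('a::field \<Rightarrow> 'a \<Rightarrow> 'a) \<Rightarrow> 'a list \<Rightarrow> bool" where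
  "has_diag_coeff_mat q \<sigma> ds \<longleftrightarrow>
     (\<exists>bs. K_basis_of q UNIV bs \<and> diagonal_mat (coeff_mat \<sigma> bs) \<and>
        mset (filter (\<lambda>x. x \<noteq> 0) (map (\<lambda>i. \<sigma> (bs ! i) (bs ! i)) [0..<length bs])) = mset ds)"

definition similar_over :: "'a::field set \<Rightarrow> 'a mat \<Rightarrow> 'a mat \<Rightarrow> bool" where
  "similar_over S A B \<longleftrightarrow>
     (\<exists>P Q. similar_mat_wit A B P Q \<and> elements_mat P \<subseteq> S \<and> elements_mat Q \<subseteq> S)"

definition diag_of_list :: "'a::field list \<Rightarrow> 'a mat" where
  "diag_of_list ds = mat (length ds) (length ds) (\<lambda>(i, j). if i = j then ds ! i else 0)"

end

theory Submission
  imports Defs "HOL-Number_Theory.Residues" "HOL-Combinatorics.Permutations" "HOL-Computational_Algebra.Polynomial"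
begin

lemma fib_card_le:
  assumes "finite A" "\<And>c. c \<in> f ` A \<Longrightarrow> card {x\<in>A. f x = c} \<le> b"
  shows "card A \<le> card (f ` A) * b"
proof -
  have "A = (\<Union>c\<in>f ` A. {x\<in>A. f x = c})" by auto
  hence "card A \<le> (\<Sum>c\<in>f ` A. card {x\<in>A. f x = c})"
    using card_UN_le[of "f ` A" "\<lambda>c. {x\<in>A. f x = c}"] assms(1) by simp
  also have "\<dots> \<le> (\<Sum>c\<in>f ` A. b)" by (intro sum_mono assms(2))
  finally show ?thesis by simp
qed

lemma card_roots_monom_le:
  fixes c :: "'a::field"
  assumes "k > 0"
  shows "card {x. x ^ k = c} \<le> k"
proof -
  define p where "p = monom (1::'a) k + [:-c:]"
  have pe: "poly p x = x ^ k - c" for x by (simp add: p_def poly_monom)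
  have dp: "degree p = k" using assms unfolding p_def
    by (subst degree_add_eq_left) (auto simp: degree_monom_eq)
  have "p \<noteq> 0" using dp assms by auto
  hence "card {x. poly p x = 0} \<le> k" using card_poly_roots_bound[of p] dp by simp
  moreover have "{x. poly p x = 0} = {x. x ^ k = c}" by (auto simp: pe)
  ultimately show ?thesis by simp
qed

lemma field_pow_card:
  fixes x :: "'a::{finite,field}"
  shows "x ^ card (UNIV :: 'a set) = x"
proof (cases "x = 0")
  case False
  have "x * (\<Prod>y\<in>UNIV-{0}. x * y) = x * x ^ (card (UNIV :: 'a set) - 1) * \<Prod>(UNIV-{0})"
    by (simp add: prod.distrib mult_ac)
  also have "x * x ^ (card (UNIV :: 'a set) - 1) = x ^ Suc (card (UNIV :: 'a set) - 1)"
    by (subst power_Suc) auto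
  also have "Suc (card (UNIV :: 'a set) - 1) = card (UNIV :: 'a set)"
    using finite_UNIV_card_ge_0[where ?'a = 'a] by simp
  also have "(\<Prod>y\<in>UNIV-{0}. x * y) = (\<Prod>y\<in>UNIV-{0}. y)"
    by (rule prod.reindex_bij_witness[of _ "\<lambda>y. y / x" "\<lambda>y. x * y"]) (use False in auto)
  finally show ?thesis
    by simp
qed (use finite_UNIV_card_ge_0[where ?'a = 'a] in auto)

locale sq =
  fixes q n :: nat and \<sigma> :: "'a::{finite,field} \<Rightarrow> 'a \<Rightarrow> 'a"
  assumes pp: "prime_power q" and npos: "n > 0"
    and cardU: "card (UNIV :: 'a set) = q ^ (2 * n)"
    and ses: "sesquilinear q \<sigma>"
begin

abbreviation K :: "'a set" where "K \<equiv> subF q"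

lemma char_q: "\<exists>k. q = CHAR('a) ^ k \<and> k > 0"
proof -
  obtain p k where pk: "prime p" "k > 0" "q = p ^ k" using pp unfolding prime_power_def by auto
  have "CHAR('a) dvd card (UNIV :: 'a set)" by (rule CHAR_dvd_CARD)
  hence d: "CHAR('a) dvd p ^ (k * (2 * n))" using cardU pk by (simp add: power_mult)
  have "CHAR('a) > 0" by (rule finite_imp_CHAR_pos) simp
  hence pc: "prime CHAR('a)" by (rule prime_CHAR_semidom)
  hence "CHAR('a) dvd p" using d prime_dvd_power by blast
  hence "CHAR('a) = p" using pk(1) pc by (simp add: primes_dvd_imp_eq)
  thus ?thesis using pk by auto
qed

lemma prime_char: "prime CHAR('a)"
proof -
  have "CHAR('a) > 0" by (rule finite_imp_CHAR_pos) simp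
  thus ?thesis by (rule prime_CHAR_semidom)
qed

lemma q_ge2: "q \<ge> 2"
proof -
  obtain k where "q = CHAR('a) ^ k" "k > 0" using char_q by auto
  moreover have "CHAR('a) \<ge> 2" using prime_char prime_ge_2_nat by blast
  ultimately show ?thesis
    by (metis dual_order.trans self_le_power Suc_1 Suc_leD not0_implies_Suc not_one_le_zero)
qed

lemma frob_gen:
  assumes "m = q ^ j"
  shows "(x + y :: 'a) ^ m = x ^ m + y ^ m" "(-x :: 'a) ^ m = - (x ^ m)"
    "(\<Sum>i\<in>A. f i :: 'a) ^ m = (\<Sum>i\<in>A. f i ^ m)"
proof -
  obtain k where k: "q = CHAR('a) ^ k" using char_q by auto
  have m: "m = CHAR('a) ^ (k * j)" using assms k by (simp add: power_mult)
  show "(x + y :: 'a) ^ m = x ^ m + y ^ m" by (rule freshmans_dream'[OF prime_char m])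
  show "(\<Sum>i\<in>A. f i :: 'a) ^ m = (\<Sum>i\<in>A. f i ^ m)" by (rule freshmans_dream_sum'[OF prime_char m])
  have "m > 0" using m prime_char by (simp add: prime_gt_0_nat)
  have "(x + -x) ^ m = x ^ m + (-x) ^ m" by (rule freshmans_dream'[OF prime_char m])
  moreover have "(x + -x) ^ m = 0" using \<open>m > 0\<close> by simp
  ultimately have "0 = x ^ m + (-x) ^ m" by simp
  thus "(-x :: 'a) ^ m = - (x ^ m)" by (simp add: eq_neg_iff_add_eq_0 add.commute)
qed

lemma frob_add: "(x + y :: 'a) ^ q = x ^ q + y ^ q"
  using frob_gen(1)[of q 1] by simp
lemma frob_minus: "(-x :: 'a) ^ q = - (x ^ q)"
  using frob_gen(2)[of q 1] by simp
lemma frob_diff: "(x - y :: 'a) ^ q = x ^ q - y ^ q"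
  using frob_add[of x "-y"] frob_minus[of y] by simp
lemma frob_sum: "(\<Sum>i\<in>A. f i :: 'a) ^ q = (\<Sum>i\<in>A. f i ^ q)"
  using frob_gen(3)[of q 1] by simp

lemma K_iff: "x \<in> K \<longleftrightarrow> x ^ (q^2) = x" by (simp add: subF_def)

lemma K_qq: "x \<in> K \<Longrightarrow> (x ^ q) ^ q = x"
  by (simp add: subF_def power_mult[symmetric] power2_eq_square)

lemma pow_qq: "(x ^ q) ^ q = (x::'a) ^ (q^2)"
  by (simp add: power_mult[symmetric] power2_eq_square)

lemma K_0[simp]: "0 \<in> K" using q_ge2 by (simp add: subF_def)
lemma K_1[simp]: "1 \<in> K" by (simp add: subF_def)
lemma K_add[simp]: "x \<in> K \<Longrightarrow> y \<in> K \<Longrightarrow> x + y \<in> K"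
  by (simp add: subF_def frob_gen(1)[of "q^2" 2])
lemma K_uminus[simp]: "x \<in> K \<Longrightarrow> - x \<in> K"
  by (simp add: subF_def frob_gen(2)[of "q^2" 2])
lemma K_diff[simp]: "x \<in> K \<Longrightarrow> y \<in> K \<Longrightarrow> x - y \<in> K"
  using K_add K_uminus by (metis diff_conv_add_uminus)
lemma K_mult[simp]: "x \<in> K \<Longrightarrow> y \<in> K \<Longrightarrow> x * y \<in> K"
  by (simp add: subF_def power_mult_distrib)
lemma K_inverse[simp]: "x \<in> K \<Longrightarrow> inverse x \<in> K"
  by (simp add: subF_def power_inverse)
lemma K_divide[simp]: "x \<in> K \<Longrightarrow> y \<in> K \<Longrightarrow> x / y \<in> K"
  by (simp add: divide_inverse)
lemma K_power[simp]: "x \<in> K \<Longrightarrow> x ^ m \<in> K"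
  by (induction m) auto
lemma K_sum[simp]: "(\<And>i. i \<in> A \<Longrightarrow> f i \<in> K) \<Longrightarrow> (\<Sum>i\<in>A. f i) \<in> K"
  by (induction A rule: infinite_finite_induct) auto

lemma K_finite[simp]: "finite K" by simp

lemma card_K_le: "card K \<le> q ^ 2"
proof -
  define p where "p = monom (1::'a) (q^2) + [:0,-1:]"
  have pe: "poly p x = x ^ (q^2) - x" for x by (simp add: p_def poly_monom)
  have "q \<le> q^2" by (simp add: power2_eq_square)
  hence q2: "q^2 \<ge> 2" using q_ge2 by linarith
  have dp: "degree p = q^2" unfolding p_def using q2
    by (subst degree_add_eq_left) (auto simp: degree_monom_eq)
  have "p \<noteq> 0" using dp q2 by auto
  hence "card {x. poly p x = 0} \<le> q^2" using card_poly_roots_bound[of p] dp by simp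
  moreover have "{x. poly p x = 0} = K" by (auto simp: pe subF_def)
  ultimately show ?thesis by simp
qed

end

context sq begin

lemma q2_ge: "q^2 \<ge> 4" "q \<le> q^2"
proof -
  show "q \<le> q^2" by (simp add: power2_eq_square)
  have "2 * 2 \<le> q * q" using q_ge2 mult_le_mono by blast
  thus "q^2 \<ge> 4" by (simp add: power2_eq_square)
qed

lemma card_K: "card K = q ^ 2"
proof -
  define a where "a = q^2"
  have a4: "a \<ge> 4" using q2_ge a_def by simp
  define \<phi> where "\<phi> = (\<lambda>x::'a. x ^ a - x)"
  define P where "P = (\<Sum>i<n. monom (1::'a) (a ^ i))"
  have frob_a: "(x - y :: 'a) ^ (a ^ i) = x ^ (a^i) - y ^ (a^i)" for x y i
  proof -
    have m: "a ^ i = q ^ (2 * i)" by (simp add: a_def power_mult)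
    show ?thesis using frob_gen(1)[OF m, of x "-y"] frob_gen(2)[OF m, of y] by simp
  qed
  have psi: "poly P (\<phi> x) = 0" for x
  proof -
    have "poly P (\<phi> x) = (\<Sum>i<n. (x ^ a - x) ^ (a ^ i))"
      by (simp add: P_def poly_sum poly_monom \<phi>_def)
    also have "\<dots> = (\<Sum>i<n. x ^ (a ^ Suc i) - x ^ (a ^ i))"
      by (intro sum.cong refl) (simp add: frob_a power_mult[symmetric] mult.commute)
    also have "\<dots> = x ^ (a ^ n) - x ^ (a ^ 0)" by (rule sum_lessThan_telescope)
    also have "x ^ (a ^ n) = x" using field_pow_card[of x] cardU by (simp add: a_def power_mult)
    finally show ?thesis by simp
  qed
  have coeffP: "coeff P (a ^ (n - 1)) = 1"
  proof -
    have "coeff P (a ^ (n - 1)) = (\<Sum>i<n. if a ^ i = a ^ (n-1) then 1 else 0)"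
      by (simp add: P_def coeff_sum coeff_monom)
    also have "\<dots> = (\<Sum>i<n. if i = n - 1 then 1 else 0)"
      using a4 by (intro sum.cong refl) (simp add: power_inject_exp)
    also have "\<dots> = 1" using npos by simp
    finally show ?thesis .
  qed
  hence P0: "P \<noteq> 0" by auto
  have dP: "degree P \<le> a ^ (n - 1)"
    unfolding P_def
  proof (rule degree_sum_le)
    fix i assume "i \<in> {..<n}"
    hence "a ^ i \<le> a ^ (n - 1)" using a4 by (intro power_increasing) auto
    thus "degree (monom (1::'a) (a ^ i)) \<le> a ^ (n - 1)" using degree_monom_le order_trans by blast
  qed simp
  have img: "card (\<phi> ` UNIV) \<le> a ^ (n - 1)"
  proof -
    have "\<phi> ` UNIV \<subseteq> {x. poly P x = 0}" using psi by auto
    hence "card (\<phi> ` UNIV) \<le> card {x. poly P x = 0}"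
      by (intro card_mono) (auto simp: poly_roots_finite[OF P0])
    also have "\<dots> \<le> degree P" using card_poly_roots_bound[OF P0] .
    finally show ?thesis using dP by linarith
  qed
  have fib: "card {x\<in>UNIV. \<phi> x = c} \<le> card K" if cin: "c \<in> \<phi> ` UNIV" for c
  proof -
    obtain x0 where x0: "\<phi> x0 = c" using cin by blast
    have "{x\<in>UNIV. \<phi> x = c} \<subseteq> (\<lambda>k. x0 + k) ` K"
    proof
      fix x assume "x \<in> {x\<in>UNIV. \<phi> x = c}"
      hence "\<phi> x = \<phi> x0" using x0 by simp
      hence "(x - x0) ^ (a ^ 1) = x - x0" unfolding \<phi>_def by (subst frob_a) (simp add: algebra_simps)
      hence "x - x0 \<in> K" by (simp add: subF_def a_def)
      thus "x \<in> (\<lambda>k. x0 + k) ` K" by (intro image_eqI[of _ _ "x - x0"]) auto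
    qed
    hence "card {x\<in>UNIV. \<phi> x = c} \<le> card ((\<lambda>k. x0 + k) ` K)" by (intro card_mono) auto
    also have "\<dots> \<le> card K" by (rule card_image_le) simp
    finally show ?thesis .
  qed
  have "card (UNIV :: 'a set) \<le> card (\<phi> ` UNIV) * card K"
    by (rule fib_card_le) (use fib in auto)
  also have "\<dots> \<le> a ^ (n - 1) * card K" using img by simp
  finally have "a ^ n \<le> a ^ (n - 1) * card K" using cardU by (simp add: a_def power_mult)
  moreover have "a ^ n = a * a ^ (n - 1)" using npos by (cases n) auto
  ultimately have "a * a ^ (n - 1) \<le> card K * a ^ (n - 1)" by (simp add: mult.commute)
  hence "a \<le> card K" using a4 by simp
  thus ?thesis using card_K_le a_def by simp
qed

lemma norm_surj:
  assumes "l \<in> K" "l \<noteq> 0" "l ^ q = l"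
  shows "\<exists>\<mu>\<in>K. \<mu> ^ (q + 1) = l"
proof -
  define A where "A = K - {0}"
  define F where "F = {x::'a. x \<noteq> 0 \<and> x ^ q = x}"
  define N where "N = (\<lambda>\<mu>::'a. \<mu> ^ (q + 1))"
  have cA: "card A = q^2 - 1" using card_K by (simp add: A_def)
  have NF: "N ` A \<subseteq> F"
  proof
    fix y assume "y \<in> N ` A"
    then obtain \<mu> where m: "\<mu> \<in> K" "\<mu> \<noteq> 0" "y = \<mu> ^ (q+1)" by (auto simp: A_def N_def)
    have "(\<mu> ^ (q+1)) ^ q = (\<mu> ^ q) ^ q * \<mu> ^ q" by (simp add: power_mult_distrib)
    also have "\<dots> = \<mu> ^ (q+1)" using K_qq[OF m(1)] by (simp add: mult.commute)
    finally show "y \<in> F" using m by (simp add: F_def)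
  qed
  have cF: "card F \<le> q - 1"
  proof -
    have "F \<subseteq> {x. x ^ (q - 1) = 1}"
    proof
      fix x assume "x \<in> F"
      hence "x \<noteq> 0" "x * x ^ (q - 1) = x * 1" using q_ge2
        by (auto simp: F_def power_Suc[symmetric] simp del: power_Suc)
      thus "x \<in> {x. x ^ (q - 1) = 1}" by simp
    qed
    hence "card F \<le> card {x::'a. x ^ (q - 1) = 1}" by (intro card_mono) auto
    also have "\<dots> \<le> q - 1" by (rule card_roots_monom_le) (use q_ge2 in simp)
    finally show ?thesis .
  qed
  have "card A \<le> card (N ` A) * (q + 1)"
  proof (rule fib_card_le)
    fix c assume "c \<in> N ` A"
    have "{x\<in>A. N x = c} \<subseteq> {x. x ^ (q+1) = c}" by (auto simp: N_def)
    hence "card {x\<in>A. N x = c} \<le> card {x::'a. x ^ (q+1) = c}" by (intro card_mono) auto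
    also have "\<dots> \<le> q + 1" by (rule card_roots_monom_le) simp
    finally show "card {x\<in>A. N x = c} \<le> q + 1" .
  qed (simp add: A_def)
  moreover have "q^2 - 1 = (q - 1) * (q + 1)" using q_ge2
    by (simp add: power2_eq_square algebra_simps)
  ultimately have "(q - 1) * (q + 1) \<le> card (N ` A) * (q + 1)" using cA by simp
  hence "q - 1 \<le> card (N ` A)" by (simp only: mult_le_cancel2)
  moreover have "card (N ` A) \<le> card F" using NF by (intro card_mono) auto
  ultimately have "card (N ` A) = card F" using cF by linarith
  hence "N ` A = F" using NF by (intro card_subset_eq) auto
  moreover have "l \<in> F" using assms by (simp add: F_def)
  ultimately obtain \<mu> where "\<mu> \<in> A" "N \<mu> = l" by (metis imageE)
  thus ?thesis by (auto simp: A_def N_def)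
qed

end

context sq begin

abbreviation Ksp :: "'a list \<Rightarrow> 'a set" where "Ksp \<equiv> K_span q"
abbreviation Kind :: "'a list \<Rightarrow> bool" where "Kind \<equiv> K_indep q"
abbreviation Kbas :: "'a set \<Rightarrow> 'a list \<Rightarrow> bool" where "Kbas \<equiv> K_basis_of q"

definition Ksub :: "'a set \<Rightarrow> bool" where
  "Ksub S \<longleftrightarrow> 0 \<in> S \<and> (\<forall>x\<in>S. \<forall>y\<in>S. x + y \<in> S) \<and> (\<forall>a\<in>K. \<forall>x\<in>S. a * x \<in> S)"

lemma KsubD: assumes "Ksub S"
  shows "0 \<in> S" "x \<in> S \<Longrightarrow> y \<in> S \<Longrightarrow> x + y \<in> S" "a \<in> K \<Longrightarrow> x \<in> S \<Longrightarrow> a * x \<in> S"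
  using assms by (auto simp: Ksub_def)

lemma Ksub_minus: assumes "Ksub S" "x \<in> S" "y \<in> S" shows "x - y \<in> S"
proof -
  have "(-1) * y \<in> S" using KsubD(3)[OF assms(1) _ assms(3), of "-1"] by simp
  hence "x + (-1) * y \<in> S" using KsubD(2)[OF assms(1) assms(2)] by blast
  thus ?thesis by simp
qed

lemma Ksub_sum: assumes "Ksub S" "\<And>i. i \<in> A \<Longrightarrow> c i \<in> K" "\<And>i. i \<in> A \<Longrightarrow> v i \<in> S"
  shows "(\<Sum>i\<in>A. c i * v i) \<in> S"
  using assms(2,3)
proof (induction A rule: infinite_finite_induct)
  case (infinite A) thus ?case using KsubD(1)[OF assms(1)] by simp
next
  case empty thus ?case using KsubD(1)[OF assms(1)] by simp
next
  case (insert x F)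
  thus ?case using KsubD(2,3)[OF assms(1)] by simp
qed

lemma Ksub_UNIV: "Ksub UNIV" by (simp add: Ksub_def)

lemma Ksub_span: "Ksub (Ksp bs)"
  unfolding Ksub_def K_span_def
proof (intro conjI ballI)
  show "0 \<in> {\<Sum>i<length bs. c i * bs ! i |c. \<forall>i<length bs. c i \<in> K}"
    by (rule CollectI, rule exI[of _ "\<lambda>_. 0"]) simp
next
  fix x y assume "x \<in> {\<Sum>i<length bs. c i * bs ! i |c. \<forall>i<length bs. c i \<in> K}"
    "y \<in> {\<Sum>i<length bs. c i * bs ! i |c. \<forall>i<length bs. c i \<in> K}"
  then obtain c d where "x = (\<Sum>i<length bs. c i * bs ! i)" "\<forall>i<length bs. c i \<in> K"
    "y = (\<Sum>i<length bs. d i * bs ! i)" "\<forall>i<length bs. d i \<in> K" by auto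
  thus "x + y \<in> {\<Sum>i<length bs. c i * bs ! i |c. \<forall>i<length bs. c i \<in> K}"
    by (intro CollectI exI[of _ "\<lambda>i. c i + d i"]) (auto simp: sum.distrib algebra_simps)
next
  fix a x assume "a \<in> K" "x \<in> {\<Sum>i<length bs. c i * bs ! i |c. \<forall>i<length bs. c i \<in> K}"
  then obtain c where "x = (\<Sum>i<length bs. c i * bs ! i)" "\<forall>i<length bs. c i \<in> K" by auto
  thus "a * x \<in> {\<Sum>i<length bs. c i * bs ! i |c. \<forall>i<length bs. c i \<in> K}"
    using \<open>a \<in> K\<close>
    by (intro CollectI exI[of _ "\<lambda>i. a * c i"]) (auto simp: sum_distrib_left algebra_simps)
qed

lemma span_nth: assumes i: "i < length bs" shows "bs ! i \<in> Ksp bs"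
proof -
  have "(\<Sum>j<length bs. (if j = i then 1 else 0) * bs ! j) = (\<Sum>j<length bs. if j = i then bs ! i else 0)"
    by (intro sum.cong) auto
  also have "\<dots> = bs ! i" using i by simp
  finally have e: "bs ! i = (\<Sum>j<length bs. (if j = i then 1 else 0) * bs ! j)" by simp
  show ?thesis unfolding K_span_def
    by (rule CollectI, rule exI[of _ "\<lambda>j. if j = i then 1 else 0"], intro conjI e) auto
qed

lemma span_memI: "(\<And>i. i < length bs \<Longrightarrow> c i \<in> K) \<Longrightarrow> (\<Sum>i<length bs. c i * bs ! i) \<in> Ksp bs"
  unfolding K_span_def by auto

lemma span_sub: "Ksub S \<Longrightarrow> set bs \<subseteq> S \<Longrightarrow> Ksp bs \<subseteq> S"
  unfolding K_span_def by (auto intro!: Ksub_sum)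

lemma span_sub_span: assumes "set bs \<subseteq> Ksp cs" shows "Ksp bs \<subseteq> Ksp cs"
  using span_sub[OF Ksub_span[of cs] assms] .

lemma span_append: "Ksp ws \<subseteq> Ksp (ws @ rs)" "Ksp rs \<subseteq> Ksp (ws @ rs)"
proof -
  show "Ksp ws \<subseteq> Ksp (ws @ rs)"
  proof (rule span_sub_span, rule subsetI)
    fix x assume "x \<in> set ws"
    then obtain i where i: "i < length ws" "x = ws ! i" by (auto simp: in_set_conv_nth)
    hence "x = (ws @ rs) ! i" "i < length (ws @ rs)" by (auto simp: nth_append)
    thus "x \<in> Ksp (ws @ rs)" using span_nth[of i "ws @ rs"] by simp
  qed
  show "Ksp rs \<subseteq> Ksp (ws @ rs)"
  proof (rule span_sub_span, rule subsetI)
    fix x assume "x \<in> set rs"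
    then obtain i where "i < length rs" "x = rs ! i" by (auto simp: in_set_conv_nth)
    hence "x = (ws @ rs) ! (length ws + i)" "length ws + i < length (ws @ rs)" by auto
    thus "x \<in> Ksp (ws @ rs)" using span_nth[of "length ws + i" "ws @ rs"] by simp
  qed
qed

definition Dm :: "nat \<Rightarrow> (nat \<Rightarrow> 'a) set" where "Dm m = PiE {..<m} (\<lambda>_. K)"

lemma finite_Dm: "finite (Dm m)" by (simp add: Dm_def finite_PiE)
lemma card_Dm: "card (Dm m) = card K ^ m" by (simp add: Dm_def card_PiE)

lemma span_image: "Ksp bs = (\<lambda>c. \<Sum>i<length bs. c i * bs ! i) ` Dm (length bs)"
proof
  show "Ksp bs \<subseteq> (\<lambda>c. \<Sum>i<length bs. c i * bs ! i) ` Dm (length bs)"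
  proof
    fix x assume "x \<in> Ksp bs"
    then obtain c where c: "x = (\<Sum>i<length bs. c i * bs ! i)" "\<forall>i<length bs. c i \<in> K"
      by (auto simp: K_span_def)
    have "restrict c {..<length bs} \<in> Dm (length bs)" using c(2) by (auto simp: Dm_def)
    moreover have "x = (\<Sum>i<length bs. restrict c {..<length bs} i * bs ! i)" using c(1) by simp
    ultimately show "x \<in> (\<lambda>c. \<Sum>i<length bs. c i * bs ! i) ` Dm (length bs)" by blast
  qed
  show "(\<lambda>c. \<Sum>i<length bs. c i * bs ! i) ` Dm (length bs) \<subseteq> Ksp bs"
  proof (rule subsetI)
    fix x assume "x \<in> (\<lambda>c. \<Sum>i<length bs. c i * bs ! i) ` Dm (length bs)"
    then obtain c where c: "c \<in> Dm (length bs)" "x = (\<Sum>i<length bs. c i * bs ! i)" by blast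
    have "\<And>i. i < length bs \<Longrightarrow> c i \<in> K" using c(1) unfolding Dm_def by (auto dest: PiE_mem)
    thus "x \<in> Ksp bs" using c(2) span_memI[of bs c] by simp
  qed
qed

lemma indep_iff_inj: "Kind bs \<longleftrightarrow> inj_on (\<lambda>c. \<Sum>i<length bs. c i * bs ! i) (Dm (length bs))"
proof
  assume ind: "Kind bs"
  show "inj_on (\<lambda>c. \<Sum>i<length bs. c i * bs ! i) (Dm (length bs))"
  proof (rule inj_onI)
    fix c d assume c: "c \<in> Dm (length bs)" and d: "d \<in> Dm (length bs)"
      and e: "(\<Sum>i<length bs. c i * bs ! i) = (\<Sum>i<length bs. d i * bs ! i)"
    have "(\<Sum>i<length bs. (c i - d i) * bs ! i) = 0"
      unfolding left_diff_distrib sum_subtractf e by simp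
    moreover have "\<forall>i<length bs. c i - d i \<in> K"
    proof (intro allI impI)
      fix i assume i: "i < length bs"
      have "c i \<in> K" using PiE_mem[OF c[unfolded Dm_def]] i by simp
      moreover have "d i \<in> K" using PiE_mem[OF d[unfolded Dm_def]] i by simp
      ultimately show "c i - d i \<in> K" by simp
    qed
    ultimately have "\<forall>i<length bs. c i - d i = 0"
      using ind[unfolded K_indep_def, rule_format, of "\<lambda>i. c i - d i"] by blast
    thus "c = d" using c d by (intro PiE_ext[of _ "{..<length bs}" "\<lambda>_. K"]) (auto simp: Dm_def)
  qed
next
  assume inj: "inj_on (\<lambda>c. \<Sum>i<length bs. c i * bs ! i) (Dm (length bs))"
  show "Kind bs" unfolding K_indep_def
  proof (rule allI, rule impI)
    fix c assume c: "(\<forall>i<length bs. c i \<in> K) \<and> (\<Sum>i<length bs. c i * bs ! i) = 0"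
    let ?c = "restrict c {..<length bs}" and ?z = "restrict (\<lambda>_. 0) {..<length bs}"
    have cin: "?c \<in> Dm (length bs)" "?z \<in> Dm (length bs)" using c by (auto simp: Dm_def)
    have eq: "(\<lambda>c. \<Sum>i<length bs. c i * bs ! i) ?c = (\<lambda>c. \<Sum>i<length bs. c i * bs ! i) ?z"
      using c by simp
    have "?c = ?z" using inj_onD[OF inj eq cin] .
    show "\<forall>i<length bs. c i = 0"
    proof (intro allI impI)
      fix i assume "i < length bs"
      moreover have "?c i = ?z i" using \<open>?c = ?z\<close> by simp
      ultimately show "c i = 0" by simp
    qed
  qed
qed

lemma card_K_ge: "card K \<ge> 4" using card_K q2_ge by simp

lemma pow_inj: "card K ^ a = card K ^ b \<Longrightarrow> a = b"
  using card_K_ge by (simp add: power_inject_exp)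

lemma pow_le: "card K ^ a \<le> card K ^ b \<Longrightarrow> a \<le> b"
  using card_K_ge by (simp add: power_le_imp_le_exp)

lemma card_span_le: "card (Ksp bs) \<le> card K ^ length bs"
  unfolding span_image using card_image_le[OF finite_Dm, of "\<lambda>c. \<Sum>i<length bs. c i * bs ! i" "length bs"]
  by (simp add: card_Dm)

lemma card_span_indep: assumes "Kind bs" shows "card (Ksp bs) = card K ^ length bs"
proof -
  have "inj_on (\<lambda>c. \<Sum>i<length bs. c i * bs ! i) (Dm (length bs))" using assms by (simp add: indep_iff_inj)
  thus ?thesis unfolding span_image by (simp add: card_image card_Dm)
qed

lemma indep_of_card: assumes "card (Ksp bs) = card K ^ length bs" shows "Kind bs"
proof -
  have "card ((\<lambda>c. \<Sum>i<length bs. c i * bs ! i) ` Dm (length bs)) = card (Dm (length bs))"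
    using assms by (simp add: span_image card_Dm)
  hence "inj_on (\<lambda>c. \<Sum>i<length bs. c i * bs ! i) (Dm (length bs))" by (rule eq_card_imp_inj_on[OF finite_Dm])
  thus ?thesis by (simp add: indep_iff_inj)
qed

lemma basis_same_len: assumes "Kbas S bs" "Kbas S cs" shows "length bs = length cs"
proof -
  have "card K ^ length bs = card K ^ length cs"
    using assms card_span_indep[of bs] card_span_indep[of cs] unfolding K_basis_of_def by simp
  thus ?thesis by (rule pow_inj)
qed

lemma basis_from_indep:
  assumes "Kbas U vs" "set ws \<subseteq> U" "length ws = length vs" "Kind ws"
  shows "Ksp ws = U"
proof -
  have U: "U = Ksp vs" "Kind vs" using assms(1) by (auto simp: K_basis_of_def)
  have sub: "Ksp ws \<subseteq> U" using U(1) assms(2) span_sub[OF Ksub_span] by blast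
  have c1: "card (Ksp ws) = card K ^ length ws" using card_span_indep[OF assms(4)] .
  have c2: "card U = card K ^ length vs" using card_span_indep[OF U(2)] U(1) by simp
  have cw: "card (Ksp ws) = card U" using c1 c2 assms(3) by simp
  show ?thesis using sub U(1) cw by (intro card_subset_eq) auto
qed

lemma indep_from_span:
  assumes "Kbas U vs" "length ws = length vs" "Ksp ws = U"
  shows "Kind ws"
proof -
  have "Kind vs" "Ksp vs = U" using assms(1) by (auto simp: K_basis_of_def)
  hence "card U = card K ^ length vs" using card_span_indep[of vs] by simp
  thus ?thesis using assms(2,3) by (intro indep_of_card) simp
qed

lemma indep_tl: assumes "Kind (x # xs)" shows "Kind xs"
  unfolding K_indep_def
proof (rule allI, rule impI)
  fix c assume c: "(\<forall>i<length xs. c i \<in> K) \<and> (\<Sum>i<length xs. c i * xs ! i) = 0"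
  define c' where "c' = (\<lambda>i. if i = 0 then 0 else c (i - 1))"
  have s1: "(\<Sum>i<length (x # xs). c' i * (x # xs) ! i) = (\<Sum>i<length xs. c i * xs ! i)"
    by (simp add: sum.lessThan_Suc_shift c'_def del: sum.lessThan_Suc)
  have Kc': "\<forall>i<length (x # xs). c' i \<in> K"
  proof (rule allI, rule impI)
    fix i assume i: "i < length (x # xs)"
    show "c' i \<in> K"
    proof (cases i)
      case 0 thus ?thesis by (simp add: c'_def)
    next
      case (Suc j)
      hence "j < length xs" using i by simp
      hence "c j \<in> K" using c by blast
      thus ?thesis using Suc by (simp add: c'_def)
    qed
  qed
  have eq0: "(\<Sum>i<length (x # xs). c' i * (x # xs) ! i) = 0" using s1 c by simp
  have z: "\<forall>i<length (x#xs). c' i = 0"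
    using mp[OF spec[OF assms[unfolded K_indep_def], of c'] conjI[OF Kc' eq0]] .
  show "\<forall>i<length xs. c i = 0"
  proof (intro allI impI)
    fix i assume "i < length xs"
    hence "c' (Suc i) = 0" using z by simp
    thus "c i = 0" by (simp add: c'_def)
  qed
qed

lemma indep_snoc:
  assumes ind: "Kind bs" and s: "s \<notin> Ksp bs"
  shows "Kind (bs @ [s])"
  unfolding K_indep_def
proof (rule allI, rule impI)
  fix c assume c: "(\<forall>i<length (bs @ [s]). c i \<in> K) \<and> (\<Sum>i<length (bs @ [s]). c i * (bs @ [s]) ! i) = 0"
  let ?m = "length bs"
  have "(\<Sum>i<?m. c i * (bs @ [s]) ! i) = (\<Sum>i<?m. c i * bs ! i)"
    by (intro sum.cong) (auto simp: nth_append)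
  hence e: "(\<Sum>i<?m. c i * bs ! i) + c ?m * s = 0" using c by simp
  have cm: "c ?m = 0"
  proof (rule ccontr)
    assume nz: "c ?m \<noteq> 0"
    have "s = (\<Sum>i<?m. (- c i / c ?m) * bs ! i)" using e nz
      by (simp add: sum_divide_distrib[symmetric] field_simps sum_negf eq_neg_iff_add_eq_0)
    moreover have "(\<Sum>i<?m. (- c i / c ?m) * bs ! i) \<in> Ksp bs"
      using c by (intro span_memI) auto
    ultimately show False using s by simp
  qed
  have z: "(\<Sum>i<?m. c i * bs ! i) = 0" using e cm by simp
  have "\<forall>i<?m. c i = 0"
  proof -
    have "(\<forall>i<?m. c i \<in> K) \<and> (\<Sum>i<?m. c i * bs ! i) = 0" using c z by auto
    thus ?thesis using ind unfolding K_indep_def by blast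
  qed
  thus "\<forall>i<length (bs @ [s]). c i = 0" using cm by (auto simp: less_Suc_eq)
qed

lemma exists_basis:
  assumes S: "Ksub S"
  shows "\<exists>bs. Kbas S bs"
proof -
  define P where "P = (\<lambda>m. \<exists>bs. length bs = m \<and> Kind bs \<and> set bs \<subseteq> S)"
  have P0: "P 0" by (auto simp: P_def K_indep_def)
  have bound: "\<forall>m. P m \<longrightarrow> m \<le> card (UNIV :: 'a set)"
  proof (intro allI impI)
    fix m assume "P m"
    then obtain bs where bs: "length bs = m" "Kind bs" by (auto simp: P_def)
    have "card (Ksp bs) \<le> card (UNIV :: 'a set)" by (rule card_mono) auto
    hence "card K ^ m \<le> card (UNIV :: 'a set)" using card_span_indep[OF bs(2)] bs(1) by simp
    moreover have "m < card K ^ m"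
    proof -
      have "m < 2 ^ m" by (rule less_exp)
      also have "(2::nat) ^ m \<le> card K ^ m" using card_K_ge by (intro power_mono) auto
      finally show ?thesis .
    qed
    ultimately show "m \<le> card (UNIV :: 'a set)" by linarith
  qed
  have "\<exists>x. P x \<and> (\<forall>y. P y \<longrightarrow> id y \<le> id x)"
    by (rule ex_has_greatest_nat[of P 0 id "Suc (card (UNIV :: 'a set))"]) (use P0 bound in auto)
  then obtain m where m: "P m" "\<forall>y. P y \<longrightarrow> y \<le> m" by auto
  obtain bs where bs: "length bs = m" "Kind bs" "set bs \<subseteq> S" using m(1) unfolding P_def by blast
  have "Ksp bs = S"
  proof (rule ccontr)
    assume "Ksp bs \<noteq> S"
    moreover have "Ksp bs \<subseteq> S" using span_sub[OF S bs(3)] .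
    ultimately obtain s where s: "s \<in> S" "s \<notin> Ksp bs" by blast
    have "P (Suc m)" unfolding P_def using indep_snoc[OF bs(2) s(2)] bs s
      by (intro exI[of _ "bs @ [s]"]) auto
    hence "Suc m \<le> m" using m(2) by blast
    thus False by simp
  qed
  thus ?thesis using bs unfolding K_basis_of_def by blast
qed


end

context sq begin

lemma ses_K: "\<sigma> u v \<in> K" using ses by (simp add: sesquilinear_def)
lemma ses_l: "c \<in> K \<Longrightarrow> \<sigma> (c * u + u') v = c * \<sigma> u v + \<sigma> u' v"
  using ses by (simp add: sesquilinear_def)
lemma sig_add_r: "\<sigma> u (v + v') = \<sigma> u v + \<sigma> u v'"
  using ses by (simp add: sesquilinear_def)
lemma sig_sm_r: "c \<in> K \<Longrightarrow> \<sigma> u (c * v) = c ^ q * \<sigma> u v"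
  using ses by (simp add: sesquilinear_def)

lemma sig_add_l: "\<sigma> (u + u') v = \<sigma> u v + \<sigma> u' v"
  using ses_l[of 1 u u' v] by simp
lemma sig_0l[simp]: "\<sigma> 0 v = 0"
  using sig_add_l[of 0 0 v] by (metis add.right_neutral add_cancel_right_right)
lemma sig_0r[simp]: "\<sigma> u 0 = 0"
  using sig_add_r[of u 0 0] by (metis add.right_neutral add_cancel_right_right)
lemma sig_sm_l: "c \<in> K \<Longrightarrow> \<sigma> (c * u) v = c * \<sigma> u v"
  using ses_l[of c u 0 v] by simp

lemma sig_sum_l: "(\<And>i. i \<in> A \<Longrightarrow> c i \<in> K) \<Longrightarrow> \<sigma> (\<Sum>i\<in>A. c i * x i) v = (\<Sum>i\<in>A. c i * \<sigma> (x i) v)"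
proof (induction A rule: infinite_finite_induct)
  case (insert a F)
  have "\<sigma> (\<Sum>i\<in>insert a F. c i * x i) v = \<sigma> (c a * x a + (\<Sum>i\<in>F. c i * x i)) v"
    using insert.hyps by simp
  also have "\<dots> = c a * \<sigma> (x a) v + \<sigma> (\<Sum>i\<in>F. c i * x i) v"
    using insert.prems by (intro ses_l) simp
  also have "\<sigma> (\<Sum>i\<in>F. c i * x i) v = (\<Sum>i\<in>F. c i * \<sigma> (x i) v)"
    using insert.IH insert.prems by simp
  finally show ?case using insert.hyps by simp
qed simp_all

lemma sig_sum_r: "(\<And>i. i \<in> A \<Longrightarrow> c i \<in> K) \<Longrightarrow> \<sigma> u (\<Sum>i\<in>A. c i * x i) = (\<Sum>i\<in>A. c i ^ q * \<sigma> u (x i))"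
proof (induction A rule: infinite_finite_induct)
  case (insert a F)
  have "\<sigma> u (\<Sum>i\<in>insert a F. c i * x i) = \<sigma> u (c a * x a + (\<Sum>i\<in>F. c i * x i))"
    using insert.hyps by simp
  also have "\<dots> = c a ^ q * \<sigma> u (x a) + \<sigma> u (\<Sum>i\<in>F. c i * x i)"
    using insert.prems by (simp add: sig_add_r sig_sm_r)
  also have "\<sigma> u (\<Sum>i\<in>F. c i * x i) = (\<Sum>i\<in>F. c i ^ q * \<sigma> u (x i))"
    using insert.IH insert.prems by simp
  finally show ?case using insert.hyps by simp
qed simp_all

lemma sig_diff_l: "\<sigma> (u - u') v = \<sigma> u v - \<sigma> u' v"
  using ses_l[of "-1" u' u v] by simp

lemma sig_diff_r: "\<sigma> u (v - v') = \<sigma> u v - \<sigma> u v'"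
proof -
  have "\<sigma> u (v - v') = \<sigma> u (v + (-1) * v')" by simp
  also have "\<dots> = \<sigma> u v + \<sigma> u ((-1) * v')" by (rule sig_add_r)
  also have "\<sigma> u ((-1) * v') = (-1) ^ q * \<sigma> u v'" by (rule sig_sm_r) simp
  also have "(-1::'a) ^ q = -1" using frob_minus[of 1] by simp
  finally show ?thesis by simp
qed

lemma pow_q_eq0: "(x::'a) ^ q = 0 \<longleftrightarrow> x = 0"
  using q_ge2 by simp

lemma rad_adj: "u \<in> rad (adj_form q \<sigma>) \<longleftrightarrow> (\<forall>v. \<sigma> v u = 0)"
  using q_ge2 by (simp add: rad_def adj_form_def)

lemma rad_iff: "u \<in> rad \<sigma> \<longleftrightarrow> (\<forall>v. \<sigma> u v = 0)"
  by (simp add: rad_def)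

lemma Ksub_R: "Ksub (rad \<sigma> \<inter> rad (adj_form q \<sigma>))"
  unfolding Ksub_def by (auto simp: rad_adj rad_iff sig_add_l sig_add_r sig_sm_l sig_sm_r)

definition PR :: "'a \<Rightarrow> 'a \<Rightarrow> bool" where
  "PR e v \<longleftrightarrow> (\<forall>y. \<sigma> y v ^ q = e * \<sigma> v y)"

lemma PR_comb:
  assumes "PR e u" "PR e v" "a \<in> K" "b \<in> K"
  shows "PR e (a * u + b * v)"
  unfolding PR_def
proof
  fix y
  have "\<sigma> y (a * u + b * v) ^ q = (a ^ q * \<sigma> y u + b ^ q * \<sigma> y v) ^ q"
    using assms(3,4) by (simp add: sig_add_r sig_sm_r)
  also have "\<dots> = (a ^ q) ^ q * \<sigma> y u ^ q + (b ^ q) ^ q * \<sigma> y v ^ q"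
    by (simp add: frob_add power_mult_distrib)
  also have "\<dots> = a * (e * \<sigma> u y) + b * (e * \<sigma> v y)"
    using assms unfolding PR_def by (simp add: K_qq)
  also have "\<dots> = e * \<sigma> (a * u + b * v) y"
    using assms(3,4) by (simp add: sig_add_l sig_sm_l algebra_simps)
  finally show "\<sigma> y (a * u + b * v) ^ q = e * \<sigma> (a * u + b * v) y" .
qed

lemma PR_smult: "PR e u \<Longrightarrow> a \<in> K \<Longrightarrow> PR e (a * u)"
  using PR_comb[of e u u a 0] by simp

lemma PR_add: "PR e u \<Longrightarrow> PR e v \<Longrightarrow> PR e (u + v)"
  using PR_comb[of e u v 1 1] by simp

lemma PR_diff: "PR e u \<Longrightarrow> PR e v \<Longrightarrow> PR e (u - v)"
  using PR_comb[of e u v 1 "-1"] by simp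

lemma e_prop:
  assumes "d \<in> K" "d \<noteq> 0"
  shows "(d ^ (q - 1)) ^ q * d ^ (q - 1) = 1" "d ^ (q - 1) \<noteq> 0" "d ^ (q-1) \<in> K"
proof -
  have "Suc (q^2 - 1) = q^2" using q2_ge by simp
  hence "d * d ^ (q^2 - 1) = d ^ (q^2)" by (metis power_Suc)
  also have "\<dots> = d" using assms(1) by (simp add: K_iff)
  finally have d1: "d ^ (q^2 - 1) = 1" using assms(2) by simp
  have "(q - 1) * q + (q - 1) = q^2 - 1" using q_ge2
    by (simp add: power2_eq_square algebra_simps)
  hence "(d ^ (q - 1)) ^ q * d ^ (q - 1) = d ^ (q^2 - 1)"
    by (metis power_add power_mult)
  thus "(d ^ (q - 1)) ^ q * d ^ (q - 1) = 1" using d1 by simp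
  show "d ^ (q - 1) \<noteq> 0" using assms by simp
  show "d ^ (q-1) \<in> K" using assms by simp
qed

lemma PR_eq:
  assumes d1: "d1 \<in> K" "d1 \<noteq> 0" and d2: "d2 \<in> K" "d2 \<noteq> 0"
    and p1: "PR (d1 ^ (q - 1)) u" and p2: "PR (d2 ^ (q - 1)) v" and nz: "\<sigma> u v \<noteq> 0"
  shows "d1 ^ (q - 1) = d2 ^ (q - 1)"
proof -
  let ?e1 = "d1 ^ (q - 1)" and ?e2 = "d2 ^ (q - 1)"
  have a: "\<sigma> u v ^ q = ?e2 * \<sigma> v u" using p2 unfolding PR_def by blast
  have b: "\<sigma> v u ^ q = ?e1 * \<sigma> u v" using p1 unfolding PR_def by blast
  have "\<sigma> u v = (\<sigma> u v ^ q) ^ q" using K_qq[OF ses_K] by simp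
  also have "\<dots> = ?e2 ^ q * (?e1 * \<sigma> u v)" using a b by (simp add: power_mult_distrib)
  finally have "?e2 ^ q * ?e1 = 1" using nz
    by (metis mult.assoc mult_cancel_right1 mult.commute)
  moreover have "?e2 ^ q * ?e2 = 1" using e_prop(1)[OF d2] .
  ultimately have h1: "?e2 ^ q * ?e1 = ?e2 ^ q * ?e2" by simp
  have h2: "?e2 ^ q \<noteq> 0" using e_prop(2)[OF d2] by simp
  show ?thesis using mult_left_cancel[OF h2] h1 by blast
qed

lemma orth_indep:
  assumes orth: "\<And>i j. i < length ws \<Longrightarrow> j < length ws \<Longrightarrow> i \<noteq> j \<Longrightarrow> \<sigma> (ws ! i) (ws ! j) = 0"
    and nz: "\<And>i. i < length ws \<Longrightarrow> \<sigma> (ws ! i) (ws ! i) \<noteq> 0"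
  shows "Kind ws"
  unfolding K_indep_def
proof (rule allI, rule impI)
  fix c assume c: "(\<forall>i<length ws. c i \<in> K) \<and> (\<Sum>i<length ws. c i * ws ! i) = 0"
  show "\<forall>i<length ws. c i = 0"
  proof (rule allI, rule impI)
    fix j assume j: "j < length ws"
    have "0 = \<sigma> (\<Sum>i<length ws. c i * ws ! i) (ws ! j)" using c by simp
    also have "\<dots> = (\<Sum>i<length ws. c i * \<sigma> (ws ! i) (ws ! j))"
      using c by (intro sig_sum_l) blast
    also have "\<dots> = (\<Sum>i<length ws. if i = j then c j * \<sigma> (ws ! j) (ws ! j) else 0)"
      by (rule sum.cong) (use orth j in auto)
    also have "\<dots> = c j * \<sigma> (ws ! j) (ws ! j)" using j by simp
    finally show "c j = 0" using nz[OF j] by simp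
  qed
qed

lemma card_dsum:
  assumes W: "Ksub W" and R: "Ksub R" and WR: "W \<inter> R = {0}"
    and U: "{w + r | w r. w \<in> W \<and> r \<in> R} = UNIV"
  shows "card (UNIV :: 'a set) = card W * card R"
proof -
  have img: "(\<lambda>(w, r). w + r) ` (W \<times> R) = UNIV"
  proof (intro equalityI subsetI)
    fix x :: 'a
    have "x \<in> {w + r | w r. w \<in> W \<and> r \<in> R}" using U by simp
    then obtain w r where "w \<in> W" "r \<in> R" "x = w + r" by blast
    thus "x \<in> (\<lambda>(w, r). w + r) ` (W \<times> R)"
      by (intro image_eqI[of _ _ "(w, r)"]) auto
  qed simp
  have inj: "inj_on (\<lambda>(w, r). w + r) (W \<times> R)"
  proof (rule inj_onI, clarify)
    fix w r w' r' assume h: "w \<in> W" "r \<in> R" "w' \<in> W" "r' \<in> R" "w + r = w' + r'"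
    have "w - w' = r' - r" using h(5) by (simp add: algebra_simps)
    moreover have "w - w' \<in> W" "r' - r \<in> R" using h Ksub_minus W R by auto
    ultimately have "r' - r \<in> W \<inter> R" by simp
    hence "r' - r = 0" using WR by blast
    hence "w - w' = 0" "r' - r = 0" using \<open>w - w' = r' - r\<close> by auto
    thus "w = w' \<and> r = r'" by simp
  qed
  have "card (UNIV :: 'a set) = card (W \<times> R)" using card_image[OF inj] img by simp
  thus ?thesis by (simp add: card_cartesian_product)
qed

end

context sq begin

lemma indep_nz: assumes "Kind bs" "i < length bs" shows "bs ! i \<noteq> 0"
proof
  assume z: "bs ! i = 0"
  define c where "c = (\<lambda>j. if j = i then (1::'a) else 0)"
  have "(\<Sum>j<length bs. c j * bs ! j) = (\<Sum>j<length bs. if j = i then bs ! i else 0)"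
    by (intro sum.cong) (auto simp: c_def)
  also have "\<dots> = 0" using z by simp
  finally have s: "(\<Sum>j<length bs. c j * bs ! j) = 0" .
  have k: "\<forall>j<length bs. c j \<in> K" by (simp add: c_def)
  have "\<forall>j<length bs. c j = 0" using mp[OF spec[OF assms(1)[unfolded K_indep_def], of c] conjI[OF k s]] .
  hence "c i = 0" using assms(2) by blast
  thus False by (simp add: c_def)
qed

lemma exists_nonroot:
  assumes x: "x \<noteq> 0"
  shows "\<exists>c\<in>K. x * c ^ q + z * c + y * c ^ (q + 1) \<noteq> 0"
proof (rule ccontr)
  assume "\<not> ?thesis"
  hence all: "\<forall>c\<in>K. x * c ^ q + z * c + y * c ^ (q + 1) = 0" by blast
  define p where "p = monom x q + [:0, z:] + monom y (q + 1)"
  have pe: "poly p c = x * c ^ q + z * c + y * c ^ (q + 1)" for c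
    by (simp add: p_def poly_monom)
  have cz: "coeff [:0, z:] q = 0" using q_ge2 by (simp add: coeff_pCons split: nat.split)
  have "coeff p q = x" using q_ge2 cz by (simp add: p_def coeff_monom)
  hence p0: "p \<noteq> 0" using x by auto
  have dp: "degree p \<le> q + 1" unfolding p_def
    by (intro degree_add_le order.trans[OF degree_monom_le]) (use q_ge2 in auto)
  have "K \<subseteq> {c. poly p c = 0}" using all pe by auto
  hence "card K \<le> card {c. poly p c = 0}" by (intro card_mono) (auto simp: poly_roots_finite[OF p0])
  also have "\<dots> \<le> degree p" by (rule card_poly_roots_bound[OF p0])
  finally have "q^2 \<le> q + 1" using dp card_K by simp
  moreover have "q + 2 \<le> q^2"
  proof -
    have "q * 2 \<le> q * q" using q_ge2 by (intro mult_le_mono2) auto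
    hence "q + 2 \<le> q * q" using q_ge2 by linarith
    thus ?thesis by (simp add: power2_eq_square)
  qed
  ultimately show False by simp
qed

lemma sig_expand:
  assumes "c \<in> K"
  shows "\<sigma> (a + c * b) (a + c * b) = \<sigma> a a + c ^ q * \<sigma> a b + c * \<sigma> b a + c ^ (q + 1) * \<sigma> b b"
proof -
  have "\<sigma> (a + c * b) (a + c * b) = \<sigma> a (a + c * b) + c * \<sigma> b (a + c * b)"
    using assms by (simp add: sig_add_l sig_sm_l)
  also have "\<dots> = \<sigma> a a + c ^ q * \<sigma> a b + c * (\<sigma> b a + c ^ q * \<sigma> b b)"
    using assms by (simp add: sig_add_r sig_sm_r)
  finally show ?thesis by (simp add: algebra_simps)
qed

lemma span_cons_split:
  "(\<Sum>i<length (w # vs). c i * (w # vs) ! i) = c 0 * w + (\<Sum>i<length vs. c (Suc i) * vs ! i)"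
  by (simp add: sum.lessThan_Suc_shift del: sum.lessThan_Suc)

lemma Ksub_perp: "Ksub U \<Longrightarrow> Ksub {v\<in>U. \<sigma> v w = 0}"
  unfolding Ksub_def by (auto simp: sig_add_l sig_sm_l)

lemma span_in_sub: "Ksub U \<Longrightarrow> Kbas U vs \<Longrightarrow> Ksub U" by simp


end

context sq begin

lemma diag_exists:
  shows "\<And>U vs ds. Kbas U vs \<Longrightarrow> length vs = m \<Longrightarrow> length ds = m \<Longrightarrow>
   (\<forall>u\<in>U. (\<forall>v\<in>U. \<sigma> u v = 0) \<longrightarrow> u = 0) \<Longrightarrow>
   (\<forall>i<m. PR ((ds ! i) ^ (q - 1)) (vs ! i)) \<Longrightarrow> (\<forall>i<m. ds ! i \<in> K \<and> ds ! i \<noteq> 0) \<Longrightarrow>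
   \<exists>ws. length ws = m \<and> set ws \<subseteq> U \<and> (\<forall>i<m. \<forall>j<m. i \<noteq> j \<longrightarrow> \<sigma> (ws ! i) (ws ! j) = 0)
       \<and> (\<forall>i<m. \<sigma> (ws ! i) (ws ! i) = ds ! i)"
proof (induction m)
  case 0 show ?case by (intro exI[of _ "[]"]) simp
next
  case (Suc m)
  obtain v0 vt where vs: "vs = v0 # vt" using Suc.prems(2) by (cases vs) auto
  obtain d dt where ds: "ds = d # dt" using Suc.prems(3) by (cases ds) auto
  define e where "e = d ^ (q - 1)"
  have Ub: "U = Ksp vs" "Kind vs" using Suc.prems(1) by (auto simp: K_basis_of_def)
  have KU: "Ksub U" using Ub Ksub_span by simp
  have vsU: "\<And>i. i < length vs \<Longrightarrow> vs ! i \<in> U" using Ub span_nth by simp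
  have dK: "d \<in> K" "d \<noteq> 0" using Suc.prems(6) ds by auto
  have PRv: "\<And>i. i < Suc m \<Longrightarrow> PR ((ds ! i) ^ (q - 1)) (vs ! i)" using Suc.prems(5) by blast
  have dsK: "\<And>i. i < Suc m \<Longrightarrow> ds ! i \<in> K \<and> ds ! i \<noteq> 0" using Suc.prems(6) by blast
  have PR0: "PR e v0" using PRv[of 0] vs ds e_def by simp
  have v0U: "v0 \<in> U" using vsU[of 0] vs by simp
  have v0nz: "v0 \<noteq> 0" using indep_nz[OF Ub(2), of 0] vs by simp
  have enz: "e \<noteq> 0" "e \<in> K" using e_prop[OF dK] e_def by auto
  obtain y where y: "y \<in> U" "\<sigma> v0 y \<noteq> 0" using Suc.prems(4) v0U v0nz by blast
  obtain j where j: "j < Suc m" "\<sigma> v0 (vs ! j) \<noteq> 0"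
  proof -
    obtain c where c: "y = (\<Sum>i<length vs. c i * vs ! i)" "\<forall>i<length vs. c i \<in> K"
      using y(1) Ub(1) unfolding K_span_def by blast
    have eqs: "\<sigma> v0 y = (\<Sum>i<length vs. c i ^ q * \<sigma> v0 (vs ! i))"
      unfolding c(1) using c(2) by (intro sig_sum_r) blast
    have "\<exists>i<length vs. \<sigma> v0 (vs ! i) \<noteq> 0"
    proof (rule ccontr)
      assume "\<not> (\<exists>i<length vs. \<sigma> v0 (vs ! i) \<noteq> 0)"
      hence "\<forall>i\<in>{..<length vs}. c i ^ q * \<sigma> v0 (vs ! i) = 0" by auto
      hence "(\<Sum>i<length vs. c i ^ q * \<sigma> v0 (vs ! i)) = 0" by (rule sum.neutral)
      thus False using eqs y(2) by simp
    qed
    thus ?thesis using that Suc.prems(2) by auto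
  qed
  have djK: "ds ! j \<in> K" "ds ! j \<noteq> 0" using dsK[OF j(1)] by auto
  have ej: "d ^ (q - 1) = (ds ! j) ^ (q - 1)"
    by (rule PR_eq[OF dK djK _ PRv[OF j(1)] j(2)]) (use PR0 e_def in simp)
  have PRj: "PR e (vs ! j)" using PRv[OF j(1)] ej e_def by simp
  have vjU: "vs ! j \<in> U" using vsU j(1) Suc.prems(2) by simp
  obtain c where c: "c \<in> K" "\<sigma> (v0 + c * vs ! j) (v0 + c * vs ! j) \<noteq> 0" "j \<noteq> 0 \<or> c = 0"
  proof (cases "\<sigma> v0 v0 = 0")
    case False thus ?thesis using that[of 0] by simp
  next
    case True
    hence j0: "j \<noteq> 0" using j(2) vs by (cases j) auto
    obtain c where c: "c \<in> K"
      "\<sigma> v0 (vs ! j) * c ^ q + \<sigma> (vs ! j) v0 * c + \<sigma> (vs ! j) (vs ! j) * c ^ (q + 1) \<noteq> 0"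
      using exists_nonroot[OF j(2)] by blast
    have "\<sigma> (v0 + c * vs ! j) (v0 + c * vs ! j) =
      \<sigma> v0 (vs ! j) * c ^ q + \<sigma> (vs ! j) v0 * c + \<sigma> (vs ! j) (vs ! j) * c ^ (q + 1)"
      using sig_expand[OF c(1), of v0 "vs ! j"] True by (simp add: algebra_simps)
    thus ?thesis using that[of c] j0 c by simp
  qed
  define u where "u = v0 + c * vs ! j"
  have uU: "u \<in> U" unfolding u_def using KsubD[OF KU] v0U vjU c(1) by blast
  have PRu: "PR e u" using PR_comb[OF PR0 PRj, of 1 c] c(1) by (simp add: u_def)
  define s where "s = \<sigma> u u"
  have s: "s \<in> K" "s \<noteq> 0" using ses_K c(2) by (auto simp: s_def u_def)
  have sq: "s ^ q = e * s" using PRu unfolding PR_def s_def by blast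
  define l where "l = d / s"
  have lK: "l \<in> K" "l \<noteq> 0" using dK s by (auto simp: l_def)
  have dq: "d ^ q = d * e"
  proof -
    have "q = Suc (q - 1)" using q_ge2 by simp
    hence "d ^ q = d ^ Suc (q - 1)" by simp
    thus ?thesis by (simp add: e_def)
  qed
  have lq: "l ^ q = l"
  proof -
    have "l ^ q = d ^ q / s ^ q" by (simp add: l_def power_divide)
    also have "\<dots> = (d * e) / (e * s)" using dq sq by simp
    also have "\<dots> = l" using enz s by (simp add: l_def)
    finally show ?thesis .
  qed
  obtain \<mu> where mu: "\<mu> \<in> K" "\<mu> ^ (q + 1) = l" using norm_surj[OF lK lq] by blast
  have munz: "\<mu> \<noteq> 0" using mu lK by auto
  define w where "w = \<mu> * u"
  have wU: "w \<in> U" unfolding w_def using KsubD(3)[OF KU mu(1) uU] .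
  have PRw: "PR e w" unfolding w_def using PR_smult[OF PRu mu(1)] .
  have sww: "\<sigma> w w = d"
  proof -
    have "\<sigma> w w = \<mu> * (\<mu> ^ q * s)" unfolding w_def s_def using mu(1) by (simp add: sig_sm_l sig_sm_r)
    also have "\<dots> = \<mu> ^ (q + 1) * s" by simp
    also have "\<dots> = d" using mu(2) s by (simp add: l_def)
    finally show ?thesis .
  qed
  define P where "P = (\<lambda>v. v - (\<sigma> v w / d) * w)"
  have aK: "\<sigma> v w / d \<in> K" for v using ses_K dK by simp
  have PU: "P v \<in> U" if "v \<in> U" for v
    unfolding P_def using Ksub_minus[OF KU that KsubD(3)[OF KU aK wU]] .
  have Pperp: "\<sigma> (P v) w = 0" for v
  proof -
    have "\<sigma> (P v) w = \<sigma> v w - \<sigma> ((\<sigma> v w / d) * w) w" unfolding P_def by (rule sig_diff_l)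
    also have "\<sigma> ((\<sigma> v w / d) * w) w = (\<sigma> v w / d) * \<sigma> w w" by (rule sig_sm_l[OF aK])
    finally show ?thesis using sww dK by simp
  qed
  have Pdec: "v = P v + (\<sigma> v w / d) * w" for v by (simp add: P_def)
  define vs' where "vs' = map P vt"
  define U' where "U' = {v\<in>U. \<sigma> v w = 0}"
  have KU': "Ksub U'" unfolding U'_def using Ksub_perp[OF KU] .
  have lens: "length vt = m" "length dt = m" "length vs' = m"
    using Suc.prems(2,3) vs ds by (auto simp: vs'_def)
  have PRvs': "\<forall>i<m. PR ((dt ! i) ^ (q - 1)) (vs' ! i)"
  proof (intro allI impI)
    fix i assume i: "i < m"
    have p: "PR ((dt ! i) ^ (q - 1)) (vt ! i)" using PRv[of "Suc i"] i vs ds by simp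
    have dti: "dt ! i \<in> K" "dt ! i \<noteq> 0" using dsK[of "Suc i"] i ds by auto
    have vs'i: "vs' ! i = P (vt ! i)" using i lens by (simp add: vs'_def)
    show "PR ((dt ! i) ^ (q - 1)) (vs' ! i)"
    proof (cases "\<sigma> (vt ! i) w = 0")
      case True
      hence "P (vt ! i) = vt ! i" by (simp add: P_def)
      thus ?thesis using p vs'i by simp
    next
      case False
      have "(dt ! i) ^ (q - 1) = d ^ (q - 1)"
        by (rule PR_eq[OF dti dK p _ False]) (use PRw e_def in simp)
      hence "PR ((dt ! i) ^ (q - 1)) w" using PRw e_def by simp
      hence "PR ((dt ! i) ^ (q - 1)) (vt ! i - (\<sigma> (vt ! i) w / d) * w)"
        using PR_diff[OF p PR_smult[OF _ aK]] by blast
      thus ?thesis using vs'i by (simp add: P_def)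
    qed
  qed
  define S where "S = Ksp (w # vs')"
  have KS: "Ksub S" unfolding S_def by (rule Ksub_span)
  have wS: "w \<in> S" unfolding S_def using span_nth[of 0 "w # vs'"] by simp
  have vs'S: "vs' ! i \<in> S" if "i < m" for i
    unfolding S_def using span_nth[of "Suc i" "w # vs'"] that lens by simp
  have vtS: "vt ! i \<in> S" if i: "i < m" for i
  proof -
    have "P (vt ! i) \<in> S" using vs'S[OF i] i lens by (simp add: vs'_def)
    hence "P (vt ! i) + (\<sigma> (vt ! i) w / d) * w \<in> S" using KsubD[OF KS] aK wS by blast
    thus ?thesis using Pdec[of "vt ! i"] by simp
  qed
  have uS: "u \<in> S"
  proof -
    have "inverse \<mu> * w \<in> S" using KsubD(3)[OF KS _ wS] mu(1) by simp
    moreover have "inverse \<mu> * w = u" using munz by (simp add: w_def)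
    ultimately show ?thesis by simp
  qed
  have v0S: "v0 \<in> S"
  proof (cases "c = 0")
    case True thus ?thesis using uS by (simp add: u_def)
  next
    case False
    hence "j \<noteq> 0" using c(3) by simp
    then obtain j' where j': "j = Suc j'" by (cases j) auto
    hence "vs ! j \<in> S" using vtS[of j'] j(1) vs by simp
    hence "c * vs ! j \<in> S" using KsubD(3)[OF KS c(1)] by blast
    hence "u - c * vs ! j \<in> S" using Ksub_minus[OF KS uS] by blast
    thus ?thesis by (simp add: u_def)
  qed
  have setS: "set vs \<subseteq> S"
  proof
    fix x assume "x \<in> set vs"
    hence "x = v0 \<or> x \<in> set vt" using vs by simp
    thus "x \<in> S"
    proof
      assume "x \<in> set vt"
      then obtain i where "i < length vt" "x = vt ! i" by (auto simp: in_set_conv_nth)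
      thus "x \<in> S" using vtS lens by simp
    qed (use v0S in simp)
  qed
  have setU: "set (w # vs') \<subseteq> U"
  proof
    fix x assume "x \<in> set (w # vs')"
    hence "x = w \<or> x \<in> set vs'" by simp
    thus "x \<in> U"
    proof
      assume "x \<in> set vs'"
      then obtain v where "v \<in> set vt" "x = P v" by (auto simp: vs'_def)
      moreover have "v \<in> U"
      proof -
        obtain i where "i < length vt" "v = vt ! i" using \<open>v \<in> set vt\<close> by (auto simp: in_set_conv_nth)
        thus ?thesis using vsU[of "Suc i"] vs by simp
      qed
      ultimately show "x \<in> U" using PU by simp
    qed (use wU in simp)
  qed
  have span_eq: "Ksp (w # vs') = U"
  proof
    show "Ksp (w # vs') \<subseteq> U" by (rule span_sub[OF KU setU])
    show "U \<subseteq> Ksp (w # vs')" using Ub(1) span_sub[OF KS setS] by (simp add: S_def)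
  qed
  have indw: "Kind (w # vs')"
    by (rule indep_from_span[OF Suc.prems(1)]) (use span_eq lens Suc.prems(2) in auto)
  have indvs': "Kind vs'" using indep_tl[OF indw] .
  have span': "Ksp vs' = U'"
  proof
    have "set vs' \<subseteq> U'"
    proof
      fix x assume "x \<in> set vs'"
      hence "x \<in> U" using setU by auto
      moreover obtain v where "x = P v" using \<open>x \<in> set vs'\<close> by (auto simp: vs'_def)
      ultimately show "x \<in> U'" using Pperp by (simp add: U'_def)
    qed
    thus "Ksp vs' \<subseteq> U'" by (rule span_sub[OF KU'])
  next
    show "U' \<subseteq> Ksp vs'"
    proof
      fix v assume v: "v \<in> U'"
      hence "v \<in> Ksp (w # vs')" using span_eq by (simp add: U'_def)
      then obtain cc where cc: "v = (\<Sum>i<length (w # vs'). cc i * (w # vs') ! i)"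
        "\<forall>i<length (w # vs'). cc i \<in> K" unfolding K_span_def by blast
      have v2: "v = cc 0 * w + (\<Sum>i<length vs'. cc (Suc i) * vs' ! i)"
        using cc(1) span_cons_split by simp
      have ccK: "\<And>i. i \<in> {..<length vs'} \<Longrightarrow> cc (Suc i) \<in> K" using cc(2) by simp
      have cc0: "cc 0 \<in> K" using cc(2) by simp
      have "\<sigma> v w = cc 0 * \<sigma> w w + \<sigma> (\<Sum>i<length vs'. cc (Suc i) * vs' ! i) w"
        using v2 cc0 by (simp add: ses_l)
      also have "\<sigma> (\<Sum>i<length vs'. cc (Suc i) * vs' ! i) w = (\<Sum>i<length vs'. cc (Suc i) * \<sigma> (vs' ! i) w)"
        using ccK by (rule sig_sum_l)
      also have "\<dots> = 0"
        by (rule sum.neutral) (auto simp: vs'_def Pperp)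
      finally have "cc 0 * d = 0" using v sww by (simp add: U'_def)
      hence "cc 0 = 0" using dK by simp
      hence "v = (\<Sum>i<length vs'. cc (Suc i) * vs' ! i)" using v2 by simp
      thus "v \<in> Ksp vs'" using span_memI[of vs' "\<lambda>i. cc (Suc i)"] ccK by simp
    qed
  qed
  have nd': "\<forall>x\<in>U'. (\<forall>v\<in>U'. \<sigma> x v = 0) \<longrightarrow> x = 0"
  proof (intro ballI impI)
    fix x assume x: "x \<in> U'" and h: "\<forall>v\<in>U'. \<sigma> x v = 0"
    have "\<sigma> x v = 0" if v: "v \<in> U" for v
    proof -
      have PvU': "P v \<in> U'" using PU[OF v] Pperp by (simp add: U'_def)
      have "\<sigma> x v = \<sigma> x (P v + (\<sigma> v w / d) * w)" using Pdec[of v] by simp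
      also have "\<dots> = \<sigma> x (P v) + \<sigma> x ((\<sigma> v w / d) * w)" by (rule sig_add_r)
      also have "\<sigma> x ((\<sigma> v w / d) * w) = (\<sigma> v w / d) ^ q * \<sigma> x w" by (rule sig_sm_r[OF aK])
      also have "\<sigma> x (P v) = 0" using h PvU' by blast
      also have "\<sigma> x w = 0" using x by (simp add: U'_def)
      finally show ?thesis by simp
    qed
    moreover have "x \<in> U" using x by (simp add: U'_def)
    ultimately show "x = 0" using Suc.prems(4) by blast
  qed
  have dtK: "\<forall>i<m. dt ! i \<in> K \<and> dt ! i \<noteq> 0"
  proof (intro allI impI)
    fix i assume "i < m"
    hence "Suc i < Suc m" by simp
    thus "dt ! i \<in> K \<and> dt ! i \<noteq> 0" using dsK[of "Suc i"] ds by simp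
  qed
  have bas': "Kbas U' vs'" using indvs' span' by (simp add: K_basis_of_def)
  obtain ws' where ws': "length ws' = m" "set ws' \<subseteq> U'"
    "\<forall>i<m. \<forall>j<m. i \<noteq> j \<longrightarrow> \<sigma> (ws' ! i) (ws' ! j) = 0" "\<forall>i<m. \<sigma> (ws' ! i) (ws' ! i) = dt ! i"
    using Suc.IH[OF bas' lens(3) lens(2) nd' PRvs' dtK] by blast
  have perp1: "\<sigma> (ws' ! i) w = 0" if "i < m" for i
    using ws'(1,2) that nth_mem by (fastforce simp: U'_def)
  have perp2: "\<sigma> w (ws' ! i) = 0" if "i < m" for i
  proof -
    have "\<sigma> (ws' ! i) w ^ q = e * \<sigma> w (ws' ! i)" using PRw unfolding PR_def by blast
    moreover have "(0::'a) ^ q = 0" using q_ge2 by simp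
    ultimately have "e * \<sigma> w (ws' ! i) = 0" using perp1[OF that] by simp
    thus ?thesis using enz by simp
  qed
  show ?case
  proof (intro exI[of _ "w # ws'"] conjI allI impI)
    show "length (w # ws') = Suc m" using ws'(1) by simp
    show "set (w # ws') \<subseteq> U" using wU ws'(2) by (auto simp: U'_def)
  next
    fix i j assume i: "i < Suc m" and j: "j < Suc m" and ij: "i \<noteq> j"
    show "\<sigma> ((w # ws') ! i) ((w # ws') ! j) = 0"
    proof (cases i)
      case 0
      then obtain j' where "j = Suc j'" using ij by (cases j) auto
      thus ?thesis using 0 perp2[of j'] j by simp
    next
      case (Suc i')
      show ?thesis
      proof (cases j)
        case 0 thus ?thesis using Suc perp1[of i'] i by simp
      next
        case (Suc j') thus ?thesis using \<open>i = Suc i'\<close> ws'(3) i j ij by simp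
      qed
    qed
  next
    fix i assume i: "i < Suc m"
    show "\<sigma> ((w # ws') ! i) ((w # ws') ! i) = ds ! i"
      using i ws'(4) sww ds by (cases i) auto
  qed
qed


end

lemma index_mult':
  assumes "A \<in> carrier_mat a k" "B \<in> carrier_mat k b" "i < a" "j < b"
  shows "(A * B) $$ (i, j) = (\<Sum>l<k. A $$ (i, l) * B $$ (l, j))"
  using assms by (simp add: scalar_prod_def atLeast0LessThan)

lemma star_carrier[simp]: "X \<in> carrier_mat a b \<Longrightarrow> star_mat q X \<in> carrier_mat b a"
  by (simp add: star_mat_def)

lemma star_dims[simp]: "dim_row (star_mat q X) = dim_col X" "dim_col (star_mat q X) = dim_row X"
  by (simp_all add: star_mat_def)

lemma star_index: "i < dim_col X \<Longrightarrow> j < dim_row X \<Longrightarrow> star_mat q X $$ (i, j) = (X $$ (j, i)) ^ q"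
  by (simp add: star_mat_def)

lemma diag_carrier[simp]: "diag_of_list ds \<in> carrier_mat (length ds) (length ds)"
  by (simp add: diag_of_list_def)

lemma diag_dims[simp]: "dim_row (diag_of_list ds) = length ds" "dim_col (diag_of_list ds) = length ds"
  by (simp_all add: diag_of_list_def)

lemma diag_index: "i < length ds \<Longrightarrow> j < length ds \<Longrightarrow> diag_of_list ds $$ (i, j) = (if i = j then ds ! i else 0)"
  by (simp add: diag_of_list_def)

lemma diag_mult:
  assumes "length ds = length es"
  shows "diag_of_list ds * diag_of_list es = diag_of_list (map2 (*) ds es)"
proof (rule eq_matI)
  fix i j assume i: "i < dim_row (diag_of_list (map2 (*) ds es))" and j: "j < dim_col (diag_of_list (map2 (*) ds es))"
  have i': "i < length ds" "j < length ds" using i j assms by auto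
  have "(diag_of_list ds * diag_of_list es) $$ (i, j) =
      (\<Sum>l<length ds. diag_of_list ds $$ (i, l) * diag_of_list es $$ (l, j))"
    using assms i' by (intro index_mult') auto
  also have "\<dots> = (\<Sum>l<length ds. if l = i then (if i = j then ds ! i * es ! i else 0) else 0)"
    using assms i' by (intro sum.cong) (auto simp: diag_index)
  also have "\<dots> = (if i = j then ds ! i * es ! i else 0)" using i' by simp
  also have "\<dots> = diag_of_list (map2 (*) ds es) $$ (i, j)" using i' assms by (simp add: diag_index)
  finally show "(diag_of_list ds * diag_of_list es) $$ (i, j) = diag_of_list (map2 (*) ds es) $$ (i, j)" .
qed (use assms in auto)

lemma mult_cancel_left_chain:
  fixes P Q Y :: "'a::comm_ring_1 mat"
  assumes "P \<in> carrier_mat m m" "Q \<in> carrier_mat m m" "P * Q = 1\<^sub>m m" "Y \<in> carrier_mat m k"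
  shows "P * (Q * Y) = Y"
proof -
  have "P * (Q * Y) = (P * Q) * Y" by (rule assoc_mult_mat[symmetric]) (use assms in auto)
  also have "\<dots> = 1\<^sub>m m * Y" using assms(3) by (simp only:)
  also have "\<dots> = Y" using assms(4) by simp
  finally show ?thesis .
qed

context sq begin

lemma star_mult:
  fixes X Y :: "'a mat"
  assumes "X \<in> carrier_mat a k" "Y \<in> carrier_mat k b"
  shows "star_mat q (X * Y) = star_mat q Y * star_mat q X"
proof (rule eq_matI)
  fix i j assume i: "i < dim_row (star_mat q Y * star_mat q X)" and j: "j < dim_col (star_mat q Y * star_mat q X)"
  have ij: "i < b" "j < a" using i j assms by auto
  have "star_mat q (X * Y) $$ (i, j) = ((X * Y) $$ (j, i)) ^ q"
    using ij assms by (intro star_index) auto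
  also have "\<dots> = (\<Sum>l<k. X $$ (j, l) * Y $$ (l, i)) ^ q" using assms ij by (subst index_mult'[of _ a k _ b]) auto
  also have "\<dots> = (\<Sum>l<k. (Y $$ (l, i)) ^ q * (X $$ (j, l)) ^ q)"
    unfolding frob_sum by (simp add: power_mult_distrib mult.commute)
  also have "\<dots> = (star_mat q Y * star_mat q X) $$ (i, j)"
    using assms ij by (subst index_mult'[of _ b k _ a]) (auto simp: star_index)
  finally show "star_mat q (X * Y) $$ (i, j) = (star_mat q Y * star_mat q X) $$ (i, j)" .
qed (use assms in auto)

lemma star_star:
  fixes X :: "'a mat"
  assumes "X \<in> carrier_mat a b" "\<And>i j. i < a \<Longrightarrow> j < b \<Longrightarrow> X $$ (i, j) \<in> K"
  shows "star_mat q (star_mat q X) = X"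
proof (rule eq_matI)
  fix i j assume "i < dim_row X" "j < dim_col X"
  thus "star_mat q (star_mat q X) $$ (i, j) = X $$ (i, j)"
    using assms by (simp add: star_index K_qq)
qed (use assms in auto)

lemma star_one: "star_mat q (1\<^sub>m m) = (1\<^sub>m m :: 'a mat)"
  by (rule eq_matI) (use q_ge2 in \<open>auto simp: star_index\<close>)

lemma star_diag: "star_mat q (diag_of_list ds) = diag_of_list (map (\<lambda>x. x ^ q) ds :: 'a list)"
  by (rule eq_matI) (use q_ge2 in \<open>auto simp: star_index diag_index\<close>)

end



lemma cancel_chain:
  fixes P Q Y :: "'a::comm_ring_1 mat"
  assumes "P \<in> carrier_mat m m" "Q \<in> carrier_mat m m" "P * Q = 1\<^sub>m m" "dim_row Y = m"
  shows "P * (Q * Y) = Y"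
proof -
  have "Y \<in> carrier_mat m (dim_col Y)" using assms(4) by (intro carrier_matI) auto
  thus ?thesis by (rule mult_cancel_left_chain[OF assms(1-3)])
qed

context sq begin

lemma coord_unique:
  assumes "Kind xs" "\<forall>k<length xs. a k \<in> K" "\<forall>k<length xs. b k \<in> K"
    "(\<Sum>k<length xs. a k * xs ! k) = (\<Sum>k<length xs. b k * xs ! k)"
  shows "\<forall>k<length xs. a k = b k"
proof -
  have "(\<Sum>k<length xs. (a k - b k) * xs ! k) = 0"
    unfolding left_diff_distrib sum_subtractf assms(4) by simp
  moreover have "\<forall>k<length xs. a k - b k \<in> K" using assms(2,3) by simp
  ultimately have "\<forall>k<length xs. a k - b k = 0"
    using assms(1)[unfolded K_indep_def, rule_format, of "\<lambda>k. a k - b k"] by blast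
  thus ?thesis by simp
qed

lemma coords:
  assumes "Kbas W bs" "set ws \<subseteq> W"
  shows "\<exists>A. A \<in> carrier_mat (length ws) (length bs) \<and>
    (\<forall>i j. i < length ws \<longrightarrow> j < length bs \<longrightarrow> A $$ (i, j) \<in> K) \<and>
    (\<forall>i<length ws. ws ! i = (\<Sum>j<length bs. A $$ (i, j) * bs ! j))"
proof -
  have "\<forall>i\<in>{..<length ws}. \<exists>c. (\<forall>j<length bs. c j \<in> K) \<and> ws ! i = (\<Sum>j<length bs. c j * bs ! j)"
  proof
    fix i assume "i \<in> {..<length ws}"
    hence "ws ! i \<in> W" using assms(2) nth_mem by auto
    hence "ws ! i \<in> Ksp bs" using assms(1) by (simp add: K_basis_of_def)
    thus "\<exists>c. (\<forall>j<length bs. c j \<in> K) \<and> ws ! i = (\<Sum>j<length bs. c j * bs ! j)"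
      unfolding K_span_def by blast
  qed
  then obtain f where f: "\<forall>i\<in>{..<length ws}. (\<forall>j<length bs. f i j \<in> K) \<and> ws ! i = (\<Sum>j<length bs. f i j * bs ! j)"
    by (rule bchoice[elim_format]) blast
  show ?thesis
    by (rule exI[of _ "mat (length ws) (length bs) (\<lambda>(i, j). f i j)"]) (use f in auto)
qed

lemma compose:
  assumes A: "A \<in> carrier_mat a k" and B: "B \<in> carrier_mat k b"
    and y: "\<forall>i<a. y i = (\<Sum>j<k. A $$ (i, j) * x j)"
    and x: "\<forall>j<k. x j = (\<Sum>l<b. B $$ (j, l) * z l)"
    and i: "i < a"
  shows "y i = (\<Sum>l<b. (A * B) $$ (i, l) * z l)"
proof -
  have "y i = (\<Sum>j<k. A $$ (i, j) * (\<Sum>l<b. B $$ (j, l) * z l))" using y x i by simp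
  also have "\<dots> = (\<Sum>j<k. \<Sum>l<b. A $$ (i, j) * B $$ (j, l) * z l)"
    by (simp add: sum_distrib_left mult.assoc)
  also have "\<dots> = (\<Sum>l<b. \<Sum>j<k. A $$ (i, j) * B $$ (j, l) * z l)" by (rule sum.swap)
  also have "\<dots> = (\<Sum>l<b. (A * B) $$ (i, l) * z l)"
  proof (intro sum.cong refl)
    fix l assume "l \<in> {..<b}"
    hence "(A * B) $$ (i, l) = (\<Sum>j<k. A $$ (i, j) * B $$ (j, l))"
      using A B i by (intro index_mult') auto
    thus "(\<Sum>j<k. A $$ (i, j) * B $$ (j, l) * z l) = (A * B) $$ (i, l) * z l"
      by (simp add: sum_distrib_right)
  qed
  finally show ?thesis .
qed

lemma mat_K: "A \<in> carrier_mat a k \<Longrightarrow> B \<in> carrier_mat k b \<Longrightarrow>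
  (\<forall>i j. i < a \<longrightarrow> j < k \<longrightarrow> A $$ (i, j) \<in> K) \<Longrightarrow> (\<forall>i j. i < k \<longrightarrow> j < b \<longrightarrow> B $$ (i, j) \<in> K) \<Longrightarrow>
  i < a \<Longrightarrow> j < b \<Longrightarrow> (A * B) $$ (i, j) \<in> K"
  by (subst index_mult'[of A a k B b]) (auto intro!: K_sum K_mult)

lemma inv_from_coords:
  assumes A: "A \<in> carrier_mat m m" and B: "B \<in> carrier_mat m m"
    and AK: "\<forall>i j. i < m \<longrightarrow> j < m \<longrightarrow> A $$ (i, j) \<in> K"
    and BK: "\<forall>i j. i < m \<longrightarrow> j < m \<longrightarrow> B $$ (i, j) \<in> K"
    and ws: "\<forall>i<m. ws ! i = (\<Sum>j<m. A $$ (i, j) * bs ! j)"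
    and bs: "\<forall>j<m. bs ! j = (\<Sum>l<m. B $$ (j, l) * ws ! l)"
    and ind: "Kind ws" and len: "length ws = m"
  shows "A * B = 1\<^sub>m m"
proof (rule eq_matI)
  fix i l assume i: "i < dim_row (1\<^sub>m m :: 'a mat)" and l: "l < dim_col (1\<^sub>m m :: 'a mat)"
  have im: "i < m" "l < m" using i l by auto
  have e1: "ws ! i = (\<Sum>l<m. (A * B) $$ (i, l) * ws ! l)"
    by (rule compose[OF A B ws bs im(1)])
  have e2: "ws ! i = (\<Sum>l<m. (if l = i then 1 else 0) * ws ! l)"
  proof -
    have "(\<Sum>l<m. (if l = i then 1 else 0) * ws ! l) = (\<Sum>l<m. if l = i then ws ! i else 0)"
      by (intro sum.cong) auto
    thus ?thesis using im by simp
  qed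
  have "\<forall>k<length ws. (A * B) $$ (i, k) = (if k = i then 1 else 0)"
    by (rule coord_unique[OF ind]) (use e1 e2 len im A B AK BK mat_K in auto)
  thus "(A * B) $$ (i, l) = 1\<^sub>m m $$ (i, l)" using im len by auto
qed (use A B in auto)

lemma coeff_transform:
  assumes A: "A \<in> carrier_mat nn m" and AK: "\<forall>i j. i < nn \<longrightarrow> j < m \<longrightarrow> A $$ (i, j) \<in> K"
    and ws: "\<forall>i<nn. ws ! i = (\<Sum>j<m. A $$ (i, j) * bs ! j)"
    and len: "length ws = nn" "length bs = m"
  shows "coeff_mat \<sigma> ws = A * coeff_mat \<sigma> bs * star_mat q A"
proof (rule eq_matI)
  have C: "coeff_mat \<sigma> bs \<in> carrier_mat m m" using len by (simp add: coeff_mat_def)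
  fix i l assume i: "i < dim_row (A * coeff_mat \<sigma> bs * star_mat q A)"
    and l: "l < dim_col (A * coeff_mat \<sigma> bs * star_mat q A)"
  have il: "i < nn" "l < nn" using i l A by auto
  have "coeff_mat \<sigma> ws $$ (i, l) = \<sigma> (ws ! i) (ws ! l)" using il len by (simp add: coeff_mat_def)
  also have "\<dots> = \<sigma> (\<Sum>j<m. A $$ (i, j) * bs ! j) (\<Sum>k<m. A $$ (l, k) * bs ! k)" using ws il by simp
  also have "\<dots> = (\<Sum>j<m. A $$ (i, j) * \<sigma> (bs ! j) (\<Sum>k<m. A $$ (l, k) * bs ! k))"
    using AK il by (intro sig_sum_l) auto
  also have "\<dots> = (\<Sum>j<m. A $$ (i, j) * (\<Sum>k<m. A $$ (l, k) ^ q * \<sigma> (bs ! j) (bs ! k)))"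
    using AK il by (intro sum.cong refl arg_cong2[where f="(*)"] sig_sum_r) auto
  also have "\<dots> = (\<Sum>j<m. \<Sum>k<m. A $$ (i, j) * \<sigma> (bs ! j) (bs ! k) * A $$ (l, k) ^ q)"
    by (simp add: sum_distrib_left algebra_simps)
  also have "\<dots> = (\<Sum>k<m. \<Sum>j<m. A $$ (i, j) * \<sigma> (bs ! j) (bs ! k) * A $$ (l, k) ^ q)"
    by (rule sum.swap)
  also have "\<dots> = (\<Sum>k<m. (A * coeff_mat \<sigma> bs) $$ (i, k) * star_mat q A $$ (k, l))"
  proof (intro sum.cong refl)
    fix k assume k: "k \<in> {..<m}"
    have "(A * coeff_mat \<sigma> bs) $$ (i, k) = (\<Sum>j<m. A $$ (i, j) * coeff_mat \<sigma> bs $$ (j, k))"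
      using A C il k by (intro index_mult') auto
    also have "\<dots> = (\<Sum>j<m. A $$ (i, j) * \<sigma> (bs ! j) (bs ! k))"
      using k len by (intro sum.cong refl) (simp add: coeff_mat_def)
    finally have e1: "(A * coeff_mat \<sigma> bs) $$ (i, k) = (\<Sum>j<m. A $$ (i, j) * \<sigma> (bs ! j) (bs ! k))" .
    have e2: "star_mat q A $$ (k, l) = A $$ (l, k) ^ q" using A k il by (intro star_index) auto
    show "(\<Sum>j<m. A $$ (i, j) * \<sigma> (bs ! j) (bs ! k) * A $$ (l, k) ^ q) =
      (A * coeff_mat \<sigma> bs) $$ (i, k) * star_mat q A $$ (k, l)"
      unfolding e1 e2 by (simp add: sum_distrib_right)
  qed
  also have "\<dots> = (A * coeff_mat \<sigma> bs * star_mat q A) $$ (i, l)"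
    using A C il by (intro index_mult'[symmetric, of _ nn m _ nn]) auto
  finally show "coeff_mat \<sigma> ws $$ (i, l) = (A * coeff_mat \<sigma> bs * star_mat q A) $$ (i, l)" .
qed (use A len in \<open>auto simp: coeff_mat_def\<close>)


end

context sq begin

lemma diag_inv:
  assumes "\<forall>i<length ds. ds ! i \<noteq> (0::'a)"
  shows "diag_of_list ds * diag_of_list (map inverse ds) = 1\<^sub>m (length ds)"
    "diag_of_list (map inverse ds) * diag_of_list ds = 1\<^sub>m (length ds)"
proof -
  have "diag_of_list (map2 (*) ds (map inverse ds)) = 1\<^sub>m (length ds)"
    by (rule eq_matI) (use assms in \<open>auto simp: diag_index\<close>)
  moreover have "diag_of_list (map2 (*) (map inverse ds) ds) = 1\<^sub>m (length ds)"
    by (rule eq_matI) (use assms in \<open>auto simp: diag_index\<close>)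
  ultimately show "diag_of_list ds * diag_of_list (map inverse ds) = 1\<^sub>m (length ds)"
    "diag_of_list (map inverse ds) * diag_of_list ds = 1\<^sub>m (length ds)"
    by (simp_all add: diag_mult)
qed

lemma diag_qinv:
  assumes "\<forall>i<length ds. ds ! i \<noteq> (0::'a)"
  shows "diag_of_list (map (\<lambda>x. x ^ q) ds) * diag_of_list (map inverse ds) = diag_of_list (map (\<lambda>d. d ^ (q - 1)) ds)"
proof -
  have "map2 (*) (map (\<lambda>x. x ^ q) ds) (map inverse ds) = map (\<lambda>d. d ^ (q - 1)) ds"
  proof (rule nth_equalityI)
    fix i assume i: "i < length (map2 (*) (map (\<lambda>x. x ^ q) ds) (map inverse ds))"
    hence i': "i < length ds" by simp
    have "q = Suc (q - 1)" using q_ge2 by simp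
    hence "ds ! i ^ q = ds ! i * ds ! i ^ (q - 1)" by (metis power_Suc)
    thus "map2 (*) (map (\<lambda>x. x ^ q) ds) (map inverse ds) ! i = map (\<lambda>d. d ^ (q - 1)) ds ! i"
      using i' assms by (simp add: field_simps)
  qed simp
  thus ?thesis by (simp add: diag_mult)
qed

lemma mat_dir:
  assumes bW: "Kbas W bs" and wW: "Kbas W ws" and len: "length ws = m" "length bs = m" "length ds = m"
    and orth: "\<forall>i<m. \<forall>j<m. i \<noteq> j \<longrightarrow> \<sigma> (ws ! i) (ws ! j) = 0"
    and dg: "\<forall>i<m. \<sigma> (ws ! i) (ws ! i) = ds ! i" and nz: "\<forall>i<m. ds ! i \<noteq> 0"
  shows "\<exists>Ci. Ci \<in> carrier_mat m m \<and> coeff_mat \<sigma> bs * Ci = 1\<^sub>m m \<and> Ci * coeff_mat \<sigma> bs = 1\<^sub>m m \<and>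
     similar_over K (star_mat q (coeff_mat \<sigma> bs) * Ci) (diag_of_list (map (\<lambda>d. d ^ (q - 1)) ds))"
proof -
  have wsW: "set ws \<subseteq> W" using wW span_nth by (auto simp: K_basis_of_def in_set_conv_nth)
  have bsW: "set bs \<subseteq> W" using bW span_nth by (auto simp: K_basis_of_def in_set_conv_nth)
  obtain A where A: "A \<in> carrier_mat m m" "\<forall>i j. i < m \<longrightarrow> j < m \<longrightarrow> A $$ (i, j) \<in> K"
    "\<forall>i<m. ws ! i = (\<Sum>j<m. A $$ (i, j) * bs ! j)"
    using coords[OF bW wsW] len by auto
  obtain B where B: "B \<in> carrier_mat m m" "\<forall>i j. i < m \<longrightarrow> j < m \<longrightarrow> B $$ (i, j) \<in> K"
    "\<forall>i<m. bs ! i = (\<Sum>j<m. B $$ (i, j) * ws ! j)"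
    using coords[OF wW bsW] len by auto
  have indw: "Kind ws" and indb: "Kind bs" using wW bW by (auto simp: K_basis_of_def)
  have AB: "A * B = 1\<^sub>m m" by (rule inv_from_coords[OF A(1) B(1) A(2) B(2) A(3) B(3) indw len(1)])
  have BA: "B * A = 1\<^sub>m m" by (rule inv_from_coords[OF B(1) A(1) B(2) A(2) B(3) A(3) indb len(2)])
  define C where "C = coeff_mat \<sigma> bs"
  have Cc: "C \<in> carrier_mat m m" using len by (simp add: C_def coeff_mat_def)
  define D where "D = diag_of_list ds"
  have Dc: "D \<in> carrier_mat m m" using diag_carrier[of ds] len by (simp add: D_def)
  have wsD: "coeff_mat \<sigma> ws = D"
    by (rule eq_matI) (use len orth dg in \<open>auto simp: coeff_mat_def D_def diag_index\<close>)
  have E1: "A * C * star_mat q A = D"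
    using coeff_transform[OF A(1) A(2) A(3) len(1,2)] wsD by (simp add: C_def)
  define sA where "sA = star_mat q A"
  define sB where "sB = star_mat q B"
  have sAc: "sA \<in> carrier_mat m m" and sBc: "sB \<in> carrier_mat m m" using A(1) B(1) by (auto simp: sA_def sB_def)
  have sAB: "sA * sB = 1\<^sub>m m"
    using star_mult[OF B(1) A(1)] BA star_one by (simp add: sA_def sB_def)
  have sBA: "sB * sA = 1\<^sub>m m"
    using star_mult[OF A(1) B(1)] AB star_one by (simp add: sA_def sB_def)
  have ssB: "star_mat q sB = B" unfolding sB_def by (rule star_star[OF B(1)]) (use B(2) in auto)
  define Di where "Di = diag_of_list (map inverse ds)"
  have Dic: "Di \<in> carrier_mat m m" using diag_carrier[of "map inverse ds"] len by (simp add: Di_def)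
  have nz': "\<forall>i<length ds. ds ! i \<noteq> 0" using nz len by simp
  have DDi: "D * Di = 1\<^sub>m m" and DiD: "Di * D = 1\<^sub>m m" using diag_inv[OF nz'] len by (auto simp: D_def Di_def)
  define Ds where "Ds = diag_of_list (map (\<lambda>x. x ^ q) ds)"
  have Dsc: "Ds \<in> carrier_mat m m" using diag_carrier[of "map (\<lambda>x. x ^ q) ds"] len by (simp add: Ds_def)
  have sD: "star_mat q D = Ds" by (simp add: D_def Ds_def star_diag)
  define D' where "D' = diag_of_list (map (\<lambda>d. d ^ (q - 1)) ds)"
  have D'c: "D' \<in> carrier_mat m m" using diag_carrier[of "map (\<lambda>d. d ^ (q - 1)) ds"] len by (simp add: D'_def)
  have DsDi: "Ds * Di = D'" using diag_qinv[OF nz'] by (simp add: Ds_def Di_def D'_def)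
  note cs = A(1) B(1) Cc Dc sAc sBc Dic Dsc D'c
  have mc: "X * Y \<in> carrier_mat m m" if "X \<in> carrier_mat m m" "Y \<in> carrier_mat m m" for X Y :: "'a mat"
    using that by (rule mult_carrier_mat)
  have am: "X * Y * Z = X * (Y * Z)" if "X \<in> carrier_mat m m" "Y \<in> carrier_mat m m" "Z \<in> carrier_mat m m"
    for X Y Z :: "'a mat" using that by (rule assoc_mult_mat)
  have o1: "1\<^sub>m m * X = X" "X * 1\<^sub>m m = X" if "X \<in> carrier_mat m m" for X :: "'a mat"
    using that by auto
  have c1: "B * (A * Y) = Y" if "Y \<in> carrier_mat m m" for Y using that cancel_chain[OF B(1) A(1) BA] by auto
  have c2: "A * (B * Y) = Y" if "Y \<in> carrier_mat m m" for Y using that cancel_chain[OF A(1) B(1) AB] by auto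
  have c3: "sA * (sB * Y) = Y" if "Y \<in> carrier_mat m m" for Y using that cancel_chain[OF sAc sBc sAB] by auto
  have c4: "sB * (sA * Y) = Y" if "Y \<in> carrier_mat m m" for Y using that cancel_chain[OF sBc sAc sBA] by auto
  have c5: "D * (Di * Y) = Y" if "Y \<in> carrier_mat m m" for Y using that cancel_chain[OF Dc Dic DDi] by auto
  have c6: "Di * (D * Y) = Y" if "Y \<in> carrier_mat m m" for Y using that cancel_chain[OF Dic Dc DiD] by auto
  note rw = cs mc am o1 c1 c2 c3 c4 c5 c6 AB BA sAB sBA DDi DiD
  have E2: "C = B * (D * sB)"
  proof -
    have "B * (D * sB) = B * ((A * C * sA) * sB)" using E1 by (simp add: sA_def)
    also have "\<dots> = C" by (simp only: rw)
    finally show ?thesis by simp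
  qed
  define Ci where "Ci = sA * (Di * A)"
  have Cic: "Ci \<in> carrier_mat m m" unfolding Ci_def by (simp only: rw)
  have CCi: "C * Ci = 1\<^sub>m m" unfolding Ci_def E2 by (simp only: rw)
  have CiC: "Ci * C = 1\<^sub>m m" unfolding Ci_def E2 by (simp only: rw)
  have sC: "star_mat q C = B * (Ds * sB)"
  proof -
    have DsB: "D * sB \<in> carrier_mat m m" by (simp only: rw)
    have "star_mat q C = star_mat q (D * sB) * star_mat q B" unfolding E2 by (rule star_mult[OF B(1) DsB])
    also have "star_mat q (D * sB) = star_mat q sB * star_mat q D" by (rule star_mult[OF Dc sBc])
    finally have "star_mat q C = B * Ds * sB" using ssB sD by (simp add: sB_def)
    thus ?thesis by (simp only: rw)
  qed
  have main: "star_mat q C * Ci = B * D' * A"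
    unfolding sC Ci_def DsDi[symmetric] by (simp only: rw)
  have sim: "similar_mat_wit (star_mat q C * Ci) D' B A"
  proof -
    have "star_mat q C * Ci \<in> carrier_mat m m" using sC Cic by (simp only: rw)
    moreover have "dim_row (star_mat q C * Ci) = m" using calculation by auto
    ultimately show ?thesis unfolding similar_mat_wit_def Let_def using cs main AB BA by simp
  qed
  have elB: "elements_mat B \<subseteq> K" using B(1,2) by (auto dest!: elements_matD)
  have elA: "elements_mat A \<subseteq> K" using A(1,2) by (auto dest!: elements_matD)
  show ?thesis
    by (rule exI[of _ Ci]) (use Cic CCi CiC sim elA elB in \<open>auto simp: C_def D'_def similar_over_def\<close>)
qed


end

lemma perm_exists:
  assumes "mset (map f xs) = mset ds"
  shows "\<exists>ys. mset ys = mset xs \<and> map f ys = ds"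
proof -
  obtain p where p: "p permutes {..<length (map f xs)}" "permute_list p (map f xs) = ds"
    using mset_eq_permutation[OF assms[symmetric]] by blast
  have p': "p permutes {..<length xs}" using p(1) by simp
  show ?thesis
    by (rule exI[of _ "permute_list p xs"]) (use p p' permute_list_map[OF p', of f] in simp)
qed

lemma map_idx: "map (\<lambda>i. f (xs ! i)) [0..<length xs] = map f xs"
  by (rule nth_equalityI) auto

context sq begin

lemma indep_distinct: assumes "Kind xs" shows "distinct xs"
proof (rule ccontr)
  assume "\<not> distinct xs"
  then obtain i j where ij: "i < length xs" "j < length xs" "i \<noteq> j" "xs ! i = xs ! j"
    using distinct_conv_nth by blast
  define c where "c = (\<lambda>k. if k = i then (1::'a) else if k = j then -1 else 0)"
  have "(\<Sum>k<length xs. c k * xs ! k) = (\<Sum>k<length xs. (if k = i then xs ! i else 0) + (if k = j then - xs ! j else 0))"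
    by (intro sum.cong) (use ij in \<open>auto simp: c_def\<close>)
  also have "\<dots> = xs ! i - xs ! j" using ij by (simp add: sum.distrib)
  also have "\<dots> = 0" using ij by simp
  finally have s: "(\<Sum>k<length xs. c k * xs ! k) = 0" .
  have k: "\<forall>k<length xs. c k \<in> K" by (simp add: c_def)
  have "\<forall>k<length xs. c k = 0" using mp[OF spec[OF assms[unfolded K_indep_def], of c] conjI[OF k s]] .
  hence "c i = 0" using ij by blast
  thus False by (simp add: c_def)
qed

lemma basis_rad:
  assumes "Kbas UNIV es"
  shows "(\<forall>v. \<sigma> u v = 0) \<longleftrightarrow> (\<forall>j<length es. \<sigma> u (es ! j) = 0)"
    "(\<forall>v. \<sigma> v u = 0) \<longleftrightarrow> (\<forall>j<length es. \<sigma> (es ! j) u = 0)"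
proof -
  have sp: "\<exists>c. (\<forall>i<length es. c i \<in> K) \<and> v = (\<Sum>i<length es. c i * es ! i)" for v
  proof -
    have "v \<in> Ksp es" using assms by (simp add: K_basis_of_def)
    thus ?thesis unfolding K_span_def by blast
  qed
  show "(\<forall>v. \<sigma> u v = 0) \<longleftrightarrow> (\<forall>j<length es. \<sigma> u (es ! j) = 0)"
  proof
    assume h: "\<forall>j<length es. \<sigma> u (es ! j) = 0"
    show "\<forall>v. \<sigma> u v = 0"
    proof
      fix v obtain c where c: "\<forall>i<length es. c i \<in> K" "v = (\<Sum>i<length es. c i * es ! i)" using sp by blast
      have "\<sigma> u v = (\<Sum>i<length es. c i ^ q * \<sigma> u (es ! i))" unfolding c(2) using c(1) by (intro sig_sum_r) auto
      also have "\<dots> = 0" using h by simp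
      finally show "\<sigma> u v = 0" .
    qed
  qed simp
  show "(\<forall>v. \<sigma> v u = 0) \<longleftrightarrow> (\<forall>j<length es. \<sigma> (es ! j) u = 0)"
  proof
    assume h: "\<forall>j<length es. \<sigma> (es ! j) u = 0"
    show "\<forall>v. \<sigma> v u = 0"
    proof
      fix v obtain c where c: "\<forall>i<length es. c i \<in> K" "v = (\<Sum>i<length es. c i * es ! i)" using sp by blast
      have "\<sigma> v u = (\<Sum>i<length es. c i * \<sigma> (es ! i) u)" unfolding c(2) using c(1) by (intro sig_sum_l) auto
      also have "\<dots> = 0" using h by simp
      finally show "\<sigma> v u = 0" .
    qed
  qed simp
qed

lemma diag_coord:
  assumes "Kbas UNIV es" and orth: "\<forall>i<length es. \<forall>j<length es. i \<noteq> j \<longrightarrow> \<sigma> (es ! i) (es ! j) = 0"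
    and c: "\<forall>i<length es. c i \<in> K" and j: "j < length es"
  shows "\<sigma> (\<Sum>i<length es. c i * es ! i) (es ! j) = c j * \<sigma> (es ! j) (es ! j)"
    "\<sigma> (es ! j) (\<Sum>i<length es. c i * es ! i) = c j ^ q * \<sigma> (es ! j) (es ! j)"
proof -
  have "\<sigma> (\<Sum>i<length es. c i * es ! i) (es ! j) = (\<Sum>i<length es. c i * \<sigma> (es ! i) (es ! j))"
    using c by (intro sig_sum_l) auto
  also have "\<dots> = (\<Sum>i<length es. if i = j then c j * \<sigma> (es ! j) (es ! j) else 0)"
    by (intro sum.cong) (use orth j in auto)
  also have "\<dots> = c j * \<sigma> (es ! j) (es ! j)" using j by simp
  finally show "\<sigma> (\<Sum>i<length es. c i * es ! i) (es ! j) = c j * \<sigma> (es ! j) (es ! j)" .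
  have "\<sigma> (es ! j) (\<Sum>i<length es. c i * es ! i) = (\<Sum>i<length es. c i ^ q * \<sigma> (es ! j) (es ! i))"
    using c by (intro sig_sum_r) auto
  also have "\<dots> = (\<Sum>i<length es. if i = j then c j ^ q * \<sigma> (es ! j) (es ! j) else 0)"
    by (intro sum.cong) (use orth j in auto)
  also have "\<dots> = c j ^ q * \<sigma> (es ! j) (es ! j)" using j by simp
  finally show "\<sigma> (es ! j) (\<Sum>i<length es. c i * es ! i) = c j ^ q * \<sigma> (es ! j) (es ! j)" .
qed

lemma diag_rad_eq:
  assumes B: "Kbas UNIV es" and orth: "\<forall>i<length es. \<forall>j<length es. i \<noteq> j \<longrightarrow> \<sigma> (es ! i) (es ! j) = 0"
  shows "rad \<sigma> = rad (adj_form q \<sigma>)"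
proof (intro equalityI subsetI)
  fix u
  obtain c where c: "\<forall>i<length es. c i \<in> K" "u = (\<Sum>i<length es. c i * es ! i)"
  proof -
    have "u \<in> Ksp es" using B by (simp add: K_basis_of_def)
    thus ?thesis using that unfolding K_span_def by blast
  qed
  have e1: "\<sigma> u (es ! j) = c j * \<sigma> (es ! j) (es ! j)" if "j < length es" for j
    unfolding c(2) by (rule diag_coord(1)[OF B orth c(1) that])
  have e2: "\<sigma> (es ! j) u = c j ^ q * \<sigma> (es ! j) (es ! j)" if "j < length es" for j
    unfolding c(2) by (rule diag_coord(2)[OF B orth c(1) that])
  have eq: "(\<forall>j<length es. \<sigma> u (es ! j) = 0) \<longleftrightarrow> (\<forall>j<length es. \<sigma> (es ! j) u = 0)"
    using e1 e2 q_ge2 by auto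
  show "u \<in> rad (adj_form q \<sigma>)" if "u \<in> rad \<sigma>"
    using that eq basis_rad[OF B, of u] by (simp add: rad_iff rad_adj)
  show "u \<in> rad \<sigma>" if "u \<in> rad (adj_form q \<sigma>)"
    using that eq basis_rad[OF B, of u] by (simp add: rad_iff rad_adj)
qed


end

context sq begin

lemma R_zero:
  assumes "r \<in> rad \<sigma> \<inter> rad (adj_form q \<sigma>)"
  shows "\<sigma> r v = 0" "\<sigma> v r = 0"
  using assms by (auto simp: rad_iff rad_adj)

lemma sig_R:
  assumes "r \<in> rad \<sigma> \<inter> rad (adj_form q \<sigma>)" "r' \<in> rad \<sigma> \<inter> rad (adj_form q \<sigma>)"
  shows "\<sigma> (w + r) (w' + r') = \<sigma> w w'"
  using R_zero[OF assms(1)] R_zero[OF assms(2)] by (simp add: sig_add_l sig_add_r)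

lemma fwd:
  assumes rfb: "reduced_form_basis q \<sigma> bs" and hd: "has_diag_coeff_mat q \<sigma> ds"
  shows "rad \<sigma> = rad (adj_form q \<sigma>) \<and>
    (\<exists>Ci. Ci \<in> carrier_mat (length bs) (length bs) \<and>
          coeff_mat \<sigma> bs * Ci = 1\<^sub>m (length bs) \<and> Ci * coeff_mat \<sigma> bs = 1\<^sub>m (length bs) \<and>
          similar_over (subF q) (star_mat q (coeff_mat \<sigma> bs) * Ci)
            (diag_of_list (map (\<lambda>d. d ^ (q - 1)) ds)))"
proof -
  define R where "R = rad \<sigma> \<inter> rad (adj_form q \<sigma>)"
  define W where "W = Ksp bs"
  define m where "m = length bs"
  have rf: "Kind bs" "W \<inter> R = {0}" "{w + r | w r. w \<in> W \<and> r \<in> R} = UNIV"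
    using rfb by (auto simp: reduced_form_basis_def Let_def R_def W_def)
  have bW: "Kbas W bs" using rf(1) by (simp add: K_basis_of_def W_def)
  obtain es where es: "Kbas UNIV es" "diagonal_mat (coeff_mat \<sigma> es)"
    "mset (filter (\<lambda>x. x \<noteq> 0) (map (\<lambda>i. \<sigma> (es ! i) (es ! i)) [0..<length es])) = mset ds"
    using hd unfolding has_diag_coeff_mat_def by blast
  define N where "N = length es"
  have orth: "\<forall>i<length es. \<forall>j<length es. i \<noteq> j \<longrightarrow> \<sigma> (es ! i) (es ! j) = 0"
  proof (intro allI impI)
    fix i j assume "i < length es" "j < length es" "i \<noteq> j"
    thus "\<sigma> (es ! i) (es ! j) = 0" using es(2) unfolding diagonal_mat_def coeff_mat_def by auto
  qed
  have radeq: "rad \<sigma> = rad (adj_form q \<sigma>)" by (rule diag_rad_eq[OF es(1) orth])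
  have RR: "R = rad \<sigma>" using radeq by (simp add: R_def)
  define \<delta> where "\<delta> = (\<lambda>x. \<sigma> x x)"
  define es' where "es' = filter (\<lambda>x. \<delta> x \<noteq> 0) es"
  have "map (\<lambda>i. \<sigma> (es ! i) (es ! i)) [0..<length es] = map \<delta> es"
    unfolding \<delta>_def by (rule map_idx)
  hence "mset (map \<delta> es') = mset ds" using es(3) by (simp add: es'_def filter_map comp_def)
  then obtain ys where ys: "mset ys = mset es'" "map \<delta> ys = ds" using perm_exists by blast
  have dists: "distinct es" using indep_distinct es(1) by (simp add: K_basis_of_def)
  hence "distinct es'" by (simp add: es'_def)
  hence distys: "distinct ys" using mset_eq_imp_distinct_iff[OF ys(1)] by simp
  have setys: "set ys = set es'" using mset_eq_setD[OF ys(1)] .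
  have setorth: "\<sigma> x y = 0" if hxy: "x \<in> set es" "y \<in> set es" "x \<noteq> y" for x y
  proof -
    obtain i where i: "i < length es" "x = es ! i" using hxy(1) by (auto simp: in_set_conv_nth)
    obtain j where j: "j < length es" "y = es ! j" using hxy(2) by (auto simp: in_set_conv_nth)
    have "i \<noteq> j" using i j hxy(3) by auto
    thus ?thesis using orth i j by auto
  qed
  have decomp: "\<exists>w. w \<in> W \<and> x - w \<in> R" for x
  proof -
    have "x \<in> {w + r | w r. w \<in> W \<and> r \<in> R}" using rf(3) by simp
    then obtain w r where "w \<in> W" "r \<in> R" "x = w + r" by blast
    thus ?thesis by (intro exI[of _ w]) simp
  qed
  define \<pi> where "\<pi> = (\<lambda>x. SOME w. w \<in> W \<and> x - w \<in> R)"
  have pi: "\<pi> x \<in> W" "x - \<pi> x \<in> R" for x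
    using someI_ex[OF decomp[of x]] by (auto simp: \<pi>_def)
  have pisig: "\<sigma> (\<pi> x) (\<pi> y) = \<sigma> x y" for x y
  proof -
    have "\<sigma> x y = \<sigma> (\<pi> x + (x - \<pi> x)) (\<pi> y + (y - \<pi> y))" by simp
    also have "\<dots> = \<sigma> (\<pi> x) (\<pi> y)"
      by (rule sig_R) (use pi(2)[of x] pi(2)[of y] in \<open>simp_all add: R_def\<close>)
    finally show ?thesis by simp
  qed
  define ws where "ws = map \<pi> ys"
  define r where "r = length ds"
  have lenws: "length ws = r" "length ys = r" using ys(2) by (auto simp: ws_def r_def)
  have ysnz: "\<delta> y \<noteq> 0" if "y \<in> set ys" for y using that setys by (simp add: es'_def)
  have ys_es: "set ys \<subseteq> set es" using setys by (auto simp: es'_def)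
  have worth: "\<forall>i<r. \<forall>j<r. i \<noteq> j \<longrightarrow> \<sigma> (ws ! i) (ws ! j) = 0"
  proof (intro allI impI)
    fix i j assume ij: "i < r" "j < r" "i \<noteq> j"
    have "ys ! i \<noteq> ys ! j" using distys ij lenws by (simp add: nth_eq_iff_index_eq)
    moreover have "ys ! i \<in> set es" "ys ! j \<in> set es" using ys_es ij lenws nth_mem by (metis subsetD)+
    ultimately have "\<sigma> (ys ! i) (ys ! j) = 0" using setorth by blast
    thus "\<sigma> (ws ! i) (ws ! j) = 0" using ij lenws by (simp add: ws_def pisig)
  qed
  have wdiag: "\<forall>i<r. \<sigma> (ws ! i) (ws ! i) = ds ! i"
  proof (intro allI impI)
    fix i assume i: "i < r"
    have "\<sigma> (ws ! i) (ws ! i) = \<delta> (ys ! i)" using i lenws by (simp add: ws_def pisig \<delta>_def)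
    also have "\<dots> = ds ! i" using ys(2) i lenws by (metis nth_map)
    finally show "\<sigma> (ws ! i) (ws ! i) = ds ! i" .
  qed
  have dsnz: "\<forall>i<r. ds ! i \<noteq> 0"
  proof (intro allI impI)
    fix i assume i: "i < r"
    have "ds ! i = \<delta> (ys ! i)" using ys(2) i lenws by (metis nth_map)
    thus "ds ! i \<noteq> 0" using ysnz i lenws nth_mem by metis
  qed
  have indws: "Kind ws"
    by (rule orth_indep) (use worth wdiag dsnz lenws in auto)
  have wsW: "set ws \<subseteq> W" using pi by (auto simp: ws_def)
  have KW: "Ksub W" unfolding W_def by (rule Ksub_span)
  have cW: "card W = card K ^ m" using card_span_indep[OF rf(1)] by (simp add: W_def m_def)
  have "card K ^ r \<le> card K ^ m"
  proof -
    have "card (Ksp ws) \<le> card W" by (intro card_mono) (use span_sub[OF KW wsW] in auto)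
    thus ?thesis using card_span_indep[OF indws] cW lenws by simp
  qed
  hence rm: "r \<le> m" by (rule pow_le)
  define f where "f = (\<lambda>u. restrict (\<lambda>i. \<sigma> u (ws ! i)) {..<r})"
  have finj: "inj_on f W"
  proof (rule inj_onI)
    fix u u' assume u: "u \<in> W" "u' \<in> W" and fe: "f u = f u'"
    define z where "z = u - u'"
    have zW: "z \<in> W" using Ksub_minus[OF KW u] by (simp add: z_def)
    have zws: "\<sigma> z (ws ! i) = 0" if "i < r" for i
    proof -
      have "f u i = f u' i" using fe by simp
      hence "\<sigma> u (ws ! i) = \<sigma> u' (ws ! i)" using that by (simp add: f_def)
      thus ?thesis by (simp add: z_def sig_diff_l)
    qed
    have zes: "\<sigma> z (es ! j) = 0" if j: "j < length es" for j
    proof (cases "\<delta> (es ! j) = 0")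
      case True
      have "\<forall>i<length es. \<sigma> (es ! i) (es ! j) = 0"
        using orth j True by (auto simp: \<delta>_def)
      hence "\<forall>v. \<sigma> v (es ! j) = 0" using basis_rad(2)[OF es(1)] by blast
      thus ?thesis by blast
    next
      case False
      hence "es ! j \<in> set ys" using setys j by (simp add: es'_def)
      then obtain k where k: "k < r" "ys ! k = es ! j" using lenws by (auto simp: in_set_conv_nth)
      have "es ! j = ws ! k + (es ! j - \<pi> (es ! j))" using k lenws by (simp add: ws_def)
      hence "\<sigma> z (es ! j) = \<sigma> z (ws ! k) + \<sigma> z (es ! j - \<pi> (es ! j))"
        by (metis sig_add_r)
      also have "\<dots> = 0" using zws[OF k(1)] R_zero(2)[OF pi(2)[of "es ! j", unfolded R_def]] by simp
      finally show ?thesis .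
    qed
    have "\<forall>v. \<sigma> z v = 0" using basis_rad(1)[OF es(1)] zes by blast
    hence "z \<in> R" using RR by (simp add: rad_iff)
    hence "z = 0" using zW rf(2) by blast
    thus "u = u'" by (simp add: z_def)
  qed
  have fD: "f ` W \<subseteq> Dm r"
  proof (rule image_subsetI)
    fix u show "f u \<in> Dm r" unfolding f_def Dm_def by (simp add: restrict_PiE_iff ses_K)
  qed
  have "card W \<le> card (Dm r)" by (rule card_inj_on_le[OF finj fD finite_Dm])
  hence "card K ^ m \<le> card K ^ r" using cW card_Dm by simp
  hence "m \<le> r" by (rule pow_le)
  hence mr: "r = m" using rm by simp
  have wsb: "Kbas W ws"
  proof -
    have "Ksp ws = W" by (rule basis_from_indep[OF bW wsW]) (use lenws mr m_def indws in auto)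
    thus ?thesis using indws by (simp add: K_basis_of_def)
  qed
  have "\<exists>Ci. Ci \<in> carrier_mat m m \<and> coeff_mat \<sigma> bs * Ci = 1\<^sub>m m \<and> Ci * coeff_mat \<sigma> bs = 1\<^sub>m m \<and>
     similar_over K (star_mat q (coeff_mat \<sigma> bs) * Ci) (diag_of_list (map (\<lambda>d. d ^ (q - 1)) ds))"
    by (rule mat_dir[OF bW wsb]) (use lenws mr m_def worth wdiag dsnz r_def in auto)
  thus ?thesis using radeq by (simp add: m_def)
qed


end

context sq begin

lemma bwd:
  assumes rfb: "reduced_form_basis q \<sigma> bs" and dsK: "set ds \<subseteq> K"
    and radeq: "rad \<sigma> = rad (adj_form q \<sigma>)"
    and Ci: "Ci \<in> carrier_mat (length bs) (length bs)" "coeff_mat \<sigma> bs * Ci = 1\<^sub>m (length bs)"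
      "Ci * coeff_mat \<sigma> bs = 1\<^sub>m (length bs)"
    and sim: "similar_over K (star_mat q (coeff_mat \<sigma> bs) * Ci) (diag_of_list (map (\<lambda>d. d ^ (q - 1)) ds))"
  shows "has_diag_coeff_mat q \<sigma> ds"
proof -
  define R where "R = rad \<sigma> \<inter> rad (adj_form q \<sigma>)"
  define W where "W = Ksp bs"
  define m where "m = length bs"
  define C where "C = coeff_mat \<sigma> bs"
  define D' where "D' = diag_of_list (map (\<lambda>d. d ^ (q - 1)) ds)"
  have rf: "Kind bs" "W \<inter> R = {0}" "{w + r | w r. w \<in> W \<and> r \<in> R} = UNIV"
    using rfb by (auto simp: reduced_form_basis_def Let_def R_def W_def)
  have bW: "Kbas W bs" using rf(1) by (simp add: K_basis_of_def W_def)
  have RR: "R = rad \<sigma>" using radeq by (simp add: R_def)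
  have KW: "Ksub W" unfolding W_def by (rule Ksub_span)
  have KR: "Ksub R" unfolding R_def by (rule Ksub_R)
  have decomp: "\<exists>w r. w \<in> W \<and> r \<in> R \<and> x = w + r" for x
  proof -
    have "x \<in> {w + r | w r. w \<in> W \<and> r \<in> R}" using rf(3) by simp
    thus ?thesis by blast
  qed
  have Cc: "C \<in> carrier_mat m m" by (simp add: C_def coeff_mat_def m_def)
  have Cic: "Ci \<in> carrier_mat m m" using Ci(1) by (simp add: m_def)
  obtain P Q where PQ: "similar_mat_wit (star_mat q C * Ci) D' P Q" "elements_mat P \<subseteq> K" "elements_mat Q \<subseteq> K"
    using sim unfolding similar_over_def C_def D'_def by blast
  have dimr: "dim_row (star_mat q C * Ci) = m" using Cc by simp
  have PQ2: "star_mat q C * Ci \<in> carrier_mat m m" "D' \<in> carrier_mat m m" "P \<in> carrier_mat m m"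
    "Q \<in> carrier_mat m m" "P * Q = 1\<^sub>m m" "Q * P = 1\<^sub>m m" "star_mat q C * Ci = P * D' * Q"
    using PQ(1) unfolding similar_mat_wit_def Let_def dimr by auto
  have Pc: "P \<in> carrier_mat m m" and Qc: "Q \<in> carrier_mat m m" and D'c: "D' \<in> carrier_mat m m"
    using PQ2 by auto
  have lends: "length ds = m" using carrier_matD(1)[OF D'c] by (simp add: D'_def)
  have QK: "\<forall>i j. i < m \<longrightarrow> j < m \<longrightarrow> Q $$ (i, j) \<in> K"
    using PQ(3) elements_matI[OF Qc] by blast
  have PK: "\<forall>i j. i < m \<longrightarrow> j < m \<longrightarrow> P $$ (i, j) \<in> K"
    using PQ(2) elements_matI[OF Pc] by blast
  define vs where "vs = map (\<lambda>i. \<Sum>k<m. Q $$ (i, k) * bs ! k) [0..<m]"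
  have lenvs: "length vs = m" by (simp add: vs_def)
  have vsc: "\<forall>i<m. vs ! i = (\<Sum>k<m. Q $$ (i, k) * bs ! k)" by (simp add: vs_def)
  have vsW: "set vs \<subseteq> W"
  proof
    fix x assume "x \<in> set vs"
    then obtain i where i: "i < m" "x = (\<Sum>k<m. Q $$ (i, k) * bs ! k)" by (auto simp: vs_def)
    thus "x \<in> W" unfolding W_def using span_memI[of bs "\<lambda>k. Q $$ (i, k)"] QK by (simp add: m_def)
  qed
  have bsvs: "bs ! i \<in> Ksp vs" if i: "i < m" for i
  proof -
    have "(\<Sum>j<m. P $$ (i, j) * vs ! j) = (\<Sum>l<m. (P * Q) $$ (i, l) * bs ! l)"
      by (rule compose[OF Pc Qc _ vsc i]) simp
    also have "\<dots> = (\<Sum>l<m. if l = i then bs ! i else 0)"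
      using PQ2(5) i by (intro sum.cong) auto
    also have "\<dots> = bs ! i" using i by simp
    finally have "bs ! i = (\<Sum>j<m. P $$ (i, j) * vs ! j)" by simp
    thus ?thesis using span_memI[of vs "\<lambda>j. P $$ (i, j)"] PK i lenvs by simp
  qed
  have spvs: "Ksp vs = W"
  proof
    show "Ksp vs \<subseteq> W" by (rule span_sub[OF KW vsW])
    have "set bs \<subseteq> Ksp vs" using bsvs by (auto simp: in_set_conv_nth m_def)
    thus "W \<subseteq> Ksp vs" unfolding W_def by (rule span_sub_span)
  qed
  have indvs: "Kind vs" by (rule indep_from_span[OF bW]) (use lenvs spvs m_def in auto)
  define C1 where "C1 = coeff_mat \<sigma> vs"
  define sQ where "sQ = star_mat q Q"
  have sQc: "sQ \<in> carrier_mat m m" using Qc by (simp add: sQ_def)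
  have C1e: "C1 = Q * C * sQ"
    unfolding C1_def C_def sQ_def by (rule coeff_transform[OF Qc QK vsc lenvs]) (simp add: m_def)
  have C1c: "C1 \<in> carrier_mat m m" by (simp add: C1_def coeff_mat_def lenvs)
  define sC where "sC = star_mat q C"
  have sCc: "sC \<in> carrier_mat m m" using Cc by (simp add: sC_def)
  have mc: "X * Y \<in> carrier_mat m m" if "X \<in> carrier_mat m m" "Y \<in> carrier_mat m m" for X Y :: "'a mat"
    using that by (rule mult_carrier_mat)
  have am: "X * Y * Z = X * (Y * Z)" if "X \<in> carrier_mat m m" "Y \<in> carrier_mat m m" "Z \<in> carrier_mat m m"
    for X Y Z :: "'a mat" using that by (rule assoc_mult_mat)
  have o1: "1\<^sub>m m * X = X" "X * 1\<^sub>m m = X" if "X \<in> carrier_mat m m" for X :: "'a mat"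
    using that by auto
  have c1: "Q * (P * Y) = Y" if "Y \<in> carrier_mat m m" for Y using that cancel_chain[OF Qc Pc PQ2(6)] by auto
  have c2: "Ci * (C * Y) = Y" if "Y \<in> carrier_mat m m" for Y
    using that cancel_chain[OF Cic Cc, of Y] Ci(3) by (auto simp: C_def m_def)
  note rw = Cc Cic Pc Qc D'c sQc sCc mc am o1 c1 c2 PQ2(5) PQ2(6)
  have sCe: "sC = P * D' * Q * C"
  proof -
    have "sC = sC * (Ci * C)" using Ci(3) sCc by (simp add: C_def m_def)
    also have "\<dots> = (sC * Ci) * C" using sCc Cic Cc by simp
    also have "sC * Ci = P * D' * Q" using PQ2(7) by (simp add: sC_def)
    finally show ?thesis .
  qed
  have sC1: "star_mat q C1 = D' * C1"
  proof -
    have QCc: "Q * C \<in> carrier_mat m m" by (simp only: rw)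
    have "star_mat q C1 = star_mat q sQ * star_mat q (Q * C)" unfolding C1e by (rule star_mult[OF QCc sQc])
    also have "star_mat q (Q * C) = sC * sQ" unfolding sC_def sQ_def by (rule star_mult[OF Qc Cc])
    also have "star_mat q sQ = Q" unfolding sQ_def by (rule star_star[OF Qc]) (use QK in auto)
    finally have "star_mat q C1 = Q * (sC * sQ)" .
    also have "\<dots> = D' * C1" unfolding sCe C1e by (simp only: rw)
    finally show ?thesis .
  qed
  define e where "e = (\<lambda>i. (ds ! i) ^ (q - 1))"
  have star_rel: "\<sigma> (vs ! j) (vs ! i) ^ q = e i * \<sigma> (vs ! i) (vs ! j)" if ij: "i < m" "j < m" for i j
  proof -
    have "\<sigma> (vs ! j) (vs ! i) ^ q = star_mat q C1 $$ (i, j)"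
      using ij lenvs by (simp add: star_index C1_def coeff_mat_def)
    also have "\<dots> = (D' * C1) $$ (i, j)" using sC1 by simp
    also have "\<dots> = (\<Sum>l<m. D' $$ (i, l) * C1 $$ (l, j))" by (rule index_mult'[OF D'c C1c ij])
    also have "\<dots> = (\<Sum>l<m. if l = i then e i * C1 $$ (i, j) else 0)"
      using ij lends by (intro sum.cong) (auto simp: D'_def diag_index e_def)
    also have "\<dots> = e i * \<sigma> (vs ! i) (vs ! j)" using ij lenvs by (simp add: C1_def coeff_mat_def)
    finally show ?thesis .
  qed
  have PRv: "\<forall>i<m. PR ((ds ! i) ^ (q - 1)) (vs ! i)"
  proof (intro allI impI)
    fix i assume i: "i < m"
    show "PR ((ds ! i) ^ (q - 1)) (vs ! i)" unfolding PR_def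
    proof
      fix y
      obtain w r where wr: "w \<in> W" "r \<in> R" "y = w + r" using decomp by blast
      obtain c where c: "\<forall>j<m. c j \<in> K" "w = (\<Sum>j<m. c j * vs ! j)"
        using wr(1) spvs lenvs unfolding K_span_def by auto
      have "\<sigma> y (vs ! i) = \<sigma> w (vs ! i)" using R_zero(1)[OF wr(2)[unfolded R_def]] wr(3) by (simp add: sig_add_l)
      also have "\<dots> = (\<Sum>j<m. c j * \<sigma> (vs ! j) (vs ! i))" unfolding c(2) using c(1) by (intro sig_sum_l) auto
      finally have "\<sigma> y (vs ! i) ^ q = (\<Sum>j<m. c j ^ q * \<sigma> (vs ! j) (vs ! i) ^ q)"
        by (simp add: frob_sum power_mult_distrib)
      also have "\<dots> = (\<Sum>j<m. c j ^ q * (e i * \<sigma> (vs ! i) (vs ! j)))"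
        using star_rel i by (intro sum.cong) auto
      also have "\<dots> = e i * (\<Sum>j<m. c j ^ q * \<sigma> (vs ! i) (vs ! j))"
        by (simp add: sum_distrib_left algebra_simps)
      also have "(\<Sum>j<m. c j ^ q * \<sigma> (vs ! i) (vs ! j)) = \<sigma> (vs ! i) w"
        unfolding c(2) using c(1) by (intro sig_sum_r[symmetric]) auto
      also have "\<sigma> (vs ! i) w = \<sigma> (vs ! i) y" using R_zero(2)[OF wr(2)[unfolded R_def]] wr(3) by (simp add: sig_add_r)
      finally show "\<sigma> y (vs ! i) ^ q = (ds ! i) ^ (q - 1) * \<sigma> (vs ! i) y" by (simp add: e_def)
    qed
  qed
  have nd: "\<forall>u\<in>W. (\<forall>v\<in>W. \<sigma> u v = 0) \<longrightarrow> u = 0"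
  proof (intro ballI impI)
    fix u assume u: "u \<in> W" and h: "\<forall>v\<in>W. \<sigma> u v = 0"
    have "\<sigma> u y = 0" for y
    proof -
      obtain w r where wr: "w \<in> W" "r \<in> R" "y = w + r" using decomp by blast
      have "\<sigma> u y = \<sigma> u w + \<sigma> u r" using wr(3) by (simp add: sig_add_r)
      thus ?thesis using h wr(1) R_zero(2)[OF wr(2)[unfolded R_def]] by simp
    qed
    hence "u \<in> R" using RR by (simp add: rad_iff)
    thus "u = 0" using u rf(2) by blast
  qed
  have dsnz: "\<forall>i<m. ds ! i \<in> K \<and> ds ! i \<noteq> 0"
  proof (intro allI impI conjI)
    fix i assume i: "i < m"
    show "ds ! i \<in> K" using dsK i lends nth_mem by blast
    show "ds ! i \<noteq> 0"
    proof
      assume z: "ds ! i = 0"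
      have "(0::'a) ^ (q - 1) = 0" using q_ge2 by simp
      hence "\<forall>y. \<sigma> y (vs ! i) ^ q = 0" using PRv i z unfolding PR_def by simp
      hence "\<forall>y. \<sigma> y (vs ! i) = 0" using q_ge2 by simp
      hence "vs ! i \<in> rad (adj_form q \<sigma>)" by (simp add: rad_adj)
      hence "vs ! i \<in> R" using radeq by (simp add: R_def)
      moreover have "vs ! i \<in> W" using vsW i lenvs nth_mem by blast
      ultimately have "vs ! i = 0" using rf(2) by blast
      thus False using indep_nz[OF indvs] i lenvs by simp
    qed
  qed
  have vsb: "Kbas W vs" using indvs spvs by (simp add: K_basis_of_def)
  obtain ws where ws: "length ws = m" "set ws \<subseteq> W"
    "\<forall>i<m. \<forall>j<m. i \<noteq> j \<longrightarrow> \<sigma> (ws ! i) (ws ! j) = 0" "\<forall>i<m. \<sigma> (ws ! i) (ws ! i) = ds ! i"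
    using diag_exists[OF vsb lenvs lends nd PRv dsnz] by blast
  have indws: "Kind ws" by (rule orth_indep) (use ws dsnz in auto)
  have spws: "Ksp ws = W" by (rule basis_from_indep[OF bW ws(2)]) (use ws(1) indws m_def in auto)
  obtain rs where rs: "Kbas R rs" using exists_basis[OF KR] by blast
  define es where "es = ws @ rs"
  have rsR: "x \<in> R" if "x \<in> set rs" for x
    using that rs span_nth by (auto simp: K_basis_of_def in_set_conv_nth)
  have spes: "Ksp es = UNIV"
  proof (intro equalityI subsetI)
    fix x :: 'a
    obtain w r where wr: "w \<in> W" "r \<in> R" "x = w + r" using decomp by blast
    have "w \<in> Ksp es" using wr(1) spws span_append(1) by (auto simp: es_def)
    moreover have "r \<in> Ksp es" using wr(2) rs span_append(2) by (auto simp: es_def K_basis_of_def)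
    ultimately show "x \<in> Ksp es" using KsubD(2)[OF Ksub_span] wr(3) by blast
  qed simp
  have cU: "card (UNIV :: 'a set) = card W * card R" by (rule card_dsum[OF KW KR rf(2) rf(3)])
  have "card (Ksp es) = card K ^ length es"
  proof -
    have "card W = card K ^ m" using card_span_indep[OF rf(1)] by (simp add: W_def m_def)
    moreover have "card R = card K ^ length rs" using rs card_span_indep by (auto simp: K_basis_of_def)
    ultimately show ?thesis using spes cU ws(1) by (simp add: es_def power_add)
  qed
  hence indes: "Kind es" by (rule indep_of_card)
  have bes: "Kbas UNIV es" using indes spes by (simp add: K_basis_of_def)
  have esi: "es ! i = (if i < m then ws ! i else rs ! (i - m))" for i
    using ws(1) by (simp add: es_def nth_append)
  have diagm: "diagonal_mat (coeff_mat \<sigma> es)"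
    unfolding diagonal_mat_def
  proof (intro allI impI)
    fix i j assume i: "i < dim_row (coeff_mat \<sigma> es)" and j: "j < dim_col (coeff_mat \<sigma> es)" and ij: "i \<noteq> j"
    have i': "i < length es" and j': "j < length es" using i j by (auto simp: coeff_mat_def)
    have "coeff_mat \<sigma> es $$ (i, j) = \<sigma> (es ! i) (es ! j)" using i' j' by (simp add: coeff_mat_def)
    also have "\<dots> = 0"
    proof (cases "i < m")
      case True
      show ?thesis
      proof (cases "j < m")
        case True thus ?thesis using \<open>i < m\<close> ws(3) ij esi by simp
      next
        case False
        hence "es ! j \<in> R" using j' rsR esi ws(1) by (simp add: es_def)
        thus ?thesis using R_zero(2) by (simp add: R_def)
      qed
    next
      case False
      hence "es ! i \<in> R" using i' rsR esi ws(1) by (simp add: es_def)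
      thus ?thesis using R_zero(1) by (simp add: R_def)
    qed
    finally show "coeff_mat \<sigma> es $$ (i, j) = 0" .
  qed
  have mapws: "map (\<lambda>x. \<sigma> x x) ws = ds"
    by (rule nth_equalityI) (use ws lends in auto)
  have filt_rs: "filter (\<lambda>x. x \<noteq> 0) (map (\<lambda>x. \<sigma> x x) rs) = []"
    using rsR R_zero(1) by (auto simp: filter_empty_conv R_def)
  have filt_ds: "filter (\<lambda>x. x \<noteq> 0) ds = ds"
    using dsnz lends by (auto simp: filter_id_conv in_set_conv_nth)
  have mi: "map (\<lambda>i. \<sigma> (es ! i) (es ! i)) [0..<length es] = map (\<lambda>x. \<sigma> x x) es"
    using map_idx[of "\<lambda>x. \<sigma> x x" es] by simp
  have "filter (\<lambda>x. x \<noteq> 0) (map (\<lambda>x. \<sigma> x x) es) = ds"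
    unfolding es_def map_append filter_append mapws filt_rs filt_ds by simp
  hence "mset (filter (\<lambda>x. x \<noteq> 0) (map (\<lambda>i. \<sigma> (es ! i) (es ! i)) [0..<length es])) = mset ds"
    unfolding mi by simp
  thus ?thesis unfolding has_diag_coeff_mat_def using bes diagm by blast
qed

end

theorem corollary2p7:
  fixes \<sigma> :: "'a::{finite, field} \<Rightarrow> 'a \<Rightarrow> 'a"
    and q n :: nat and bs ds :: "'a list" and C :: "'a mat"
  assumes "prime_power q" and "n > 0" and "card (UNIV :: 'a set) = q ^ (2 * n)"
    and "sesquilinear q \<sigma>"
    and "reduced_form_basis q \<sigma> bs"
    and "C = coeff_mat \<sigma> bs"
    and "set ds \<subseteq> subF q"
  shows "has_diag_coeff_mat q \<sigma> ds \<longleftrightarrow>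
           (rad \<sigma> = rad (adj_form q \<sigma>) \<and>
            (\<exists>Ci. Ci \<in> carrier_mat (length bs) (length bs) \<and>
                  C * Ci = 1\<^sub>m (length bs) \<and> Ci * C = 1\<^sub>m (length bs) \<and>
                  similar_over (subF q) (star_mat q C * Ci)
                    (diag_of_list (map (\<lambda>d. d ^ (q - 1)) ds))))"
proof -
  interpret sq q n \<sigma> using assms(1-4) by unfold_locales
  show ?thesis
  proof
    assume "has_diag_coeff_mat q \<sigma> ds"
    thus "rad \<sigma> = rad (adj_form q \<sigma>) \<and>
            (\<exists>Ci. Ci \<in> carrier_mat (length bs) (length bs) \<and>
                  C * Ci = 1\<^sub>m (length bs) \<and> Ci * C = 1\<^sub>m (length bs) \<and>
                  similar_over (subF q) (star_mat q C * Ci)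
                    (diag_of_list (map (\<lambda>d. d ^ (q - 1)) ds)))"
      using fwd[OF assms(5)] assms(6) by simp
  next
    assume h: "rad \<sigma> = rad (adj_form q \<sigma>) \<and>
            (\<exists>Ci. Ci \<in> carrier_mat (length bs) (length bs) \<and>
                  C * Ci = 1\<^sub>m (length bs) \<and> Ci * C = 1\<^sub>m (length bs) \<and>
                  similar_over (subF q) (star_mat q C * Ci)
                    (diag_of_list (map (\<lambda>d. d ^ (q - 1)) ds)))"
    then obtain Ci where Ci: "Ci \<in> carrier_mat (length bs) (length bs)"
      "coeff_mat \<sigma> bs * Ci = 1\<^sub>m (length bs)" "Ci * coeff_mat \<sigma> bs = 1\<^sub>m (length bs)"
      "similar_over (subF q) (star_mat q (coeff_mat \<sigma> bs) * Ci) (diag_of_list (map (\<lambda>d. d ^ (q - 1)) ds))"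
      using assms(6) by blast
    show "has_diag_coeff_mat q \<sigma> ds"
      by (rule bwd[OF assms(5) assms(7) _ Ci]) (use h in blast)
  qed
qed

end
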